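(* Fix $\epsilon>0$. Consider the random profile matching problem RPMP-$k$ (defined in the context) with $n$ men, $n$ women, $k=k(n)$, under the Weighted Hamming distance $d_w(\mathbf{a},\mathbf{a}')=\sum_{i=1}^k 2^{-i}\mathbf{1}(a_i\neq a_i')$. Then, with high probability: (i) if $k(n)>(1+\epsilon)\log n$, the fraction of participants with multiple stable partners tends to zero as $n\to\infty$; moreover $\frac{\log X}{\log n}\to -1$ in probability as $n\to\infty$, where $X$ is the matching distance of a randomly chosen participant; and (ii) if $k(n)>(2+\epsilon)\log n$, the stable matching is unique without resorting to tie-breaking (i.e., there is exactly one stable matching, and it does not depend on the tie-breaking lists).
   Context: RPMP-$k$: there is a set $\mathcal{M}$ of $n$ men and a set $\mathcal{W}$ of $n$ women. Each participant $x$ has a profile $\mathbf{a}(x)\in Q_k=\{0,1\}^k$; the profiles are independent and uniformly distributed on $Q_k$. Write $d_w(x,y)=d_w(\mathbf{a}(x),\mathbf{a}(y))$. Each participant $x$ has a tie-breaking list $T_x$, a uniformly random ordering of the opposite sex, all independent of each other and of the profiles. The strict preference list of $x$ ranks the opposite sex in increasing order of $d_w(x,\cdot)$, breaking ties by $T_x$. Stable matchings are in the sense of Gale and Shapley; $y$ is a stable partner of $x$ if they are matched in some stable matching. The matching distance of $x$ is $d_w(x,\mu(x))$ for a stable matching $\mu$ (this value is the same for all stable matchings). "With high probability" means with probability tending to $1$ as $n\to\infty$. $\log$ denotes the base-$2$ logarithm. *)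

theory Defs
  imports "HOL-Probability.Probability"
begin

(* Weighted Hamming distance on Q_k = {0,1}^k, profiles as bool lists of length k:
   d_w(a,a') = sum_{i=1}^k 2^(-i) * 1(a_i ~= a'_i)  (a_i is list entry a!(i-1)) *)
definition dw :: "nat \<Rightarrow> bool list \<Rightarrow> bool list \<Rightarrow> real" where
  "dw k a b = (\<Sum>i\<in>{1..k}. (1/2) ^ i * (if a ! (i - 1) \<noteq> b ! (i - 1) then 1 else 0))"

(* An rinstance: profiles of men 0..n-1 and women 0..n-1, and tie-breaking rankings.
   mtie I m is the tie-breaking ranking of man m over the women (smaller = preferred). *)
record rinstance =
  mprof :: "nat \<Rightarrow> bool list"
  wprof :: "nat \<Rightarrow> bool list"
  mtie  :: "nat \<Rightarrow> nat \<Rightarrow> nat"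
  wtie  :: "nat \<Rightarrow> nat \<Rightarrow> nat"

(* strict orderings of {0..n-1}, encoded as bijective rank functions *)
definition rankings :: "nat \<Rightarrow> (nat \<Rightarrow> nat) set" where
  "rankings n = {r \<in> {..<n} \<rightarrow>\<^sub>E {..<n}. bij_betw r {..<n} {..<n}}"

definition profiles_pmf :: "nat \<Rightarrow> nat \<Rightarrow> (nat \<Rightarrow> bool list) pmf" where
  "profiles_pmf n k = Pi_pmf {..<n} [] (\<lambda>_. pmf_of_set {xs :: bool list. length xs = k})"

definition ties_pmf :: "nat \<Rightarrow> (nat \<Rightarrow> nat \<Rightarrow> nat) pmf" where
  "ties_pmf n = Pi_pmf {..<n} (\<lambda>_. 0) (\<lambda>_. pmf_of_set (rankings n))"

definition rpmp_pmf :: "nat \<Rightarrow> nat \<Rightarrow> rinstance pmf" where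
  "rpmp_pmf n k =
     bind_pmf (profiles_pmf n k) (\<lambda>A.
     bind_pmf (profiles_pmf n k) (\<lambda>B.
     bind_pmf (ties_pmf n) (\<lambda>S.
     bind_pmf (ties_pmf n) (\<lambda>T.
     return_pmf \<lparr>mprof = A, wprof = B, mtie = S, wtie = T\<rparr>))))"

definition mprefers :: "nat \<Rightarrow> rinstance \<Rightarrow> nat \<Rightarrow> nat \<Rightarrow> nat \<Rightarrow> bool" where
  "mprefers k I m w1 w2 \<longleftrightarrow>
     dw k (mprof I m) (wprof I w1) < dw k (mprof I m) (wprof I w2) \<or>
     (dw k (mprof I m) (wprof I w1) = dw k (mprof I m) (wprof I w2) \<and> mtie I m w1 < mtie I m w2)"

definition wprefers :: "nat \<Rightarrow> rinstance \<Rightarrow> nat \<Rightarrow> nat \<Rightarrow> nat \<Rightarrow> bool" where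
  "wprefers k I w m1 m2 \<longleftrightarrow>
     dw k (wprof I w) (mprof I m1) < dw k (wprof I w) (mprof I m2) \<or>
     (dw k (wprof I w) (mprof I m1) = dw k (wprof I w) (mprof I m2) \<and> wtie I w m1 < wtie I w m2)"

(* a (perfect) matching: mu m is the partner of man m *)
definition matching :: "nat \<Rightarrow> (nat \<Rightarrow> nat) \<Rightarrow> bool" where
  "matching n \<mu> \<longleftrightarrow> \<mu> \<in> {..<n} \<rightarrow>\<^sub>E {..<n} \<and> bij_betw \<mu> {..<n} {..<n}"

definition stable :: "nat \<Rightarrow> nat \<Rightarrow> rinstance \<Rightarrow> (nat \<Rightarrow> nat) \<Rightarrow> bool" where
  "stable n k I \<mu> \<longleftrightarrow> matching n \<mu> \<and>
     \<not> (\<exists>m<n. \<exists>w<n. mprefers k I m w (\<mu> m) \<and> wprefers k I w m (inv_into {..<n} \<mu> w))"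

definition man_stable_partners :: "nat \<Rightarrow> nat \<Rightarrow> rinstance \<Rightarrow> nat \<Rightarrow> nat set" where
  "man_stable_partners n k I m = {w. \<exists>\<mu>. stable n k I \<mu> \<and> \<mu> m = w}"

definition woman_stable_partners :: "nat \<Rightarrow> nat \<Rightarrow> rinstance \<Rightarrow> nat \<Rightarrow> nat set" where
  "woman_stable_partners n k I w = {m. m < n \<and> (\<exists>\<mu>. stable n k I \<mu> \<and> \<mu> m = w)}"

definition frac_multi :: "nat \<Rightarrow> nat \<Rightarrow> rinstance \<Rightarrow> real" where
  "frac_multi n k I =
     real (card {m \<in> {..<n}. 2 \<le> card (man_stable_partners n k I m)}
         + card {w \<in> {..<n}. 2 \<le> card (woman_stable_partners n k I w)}) / real (2 * n)"

(* participants: Inl m = man m, Inr w = woman w *)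
definition participant_pmf :: "nat \<Rightarrow> (nat + nat) pmf" where
  "participant_pmf n = pmf_of_set (Inl ` {..<n} \<union> Inr ` {..<n})"

definition match_dist :: "nat \<Rightarrow> nat \<Rightarrow> rinstance \<Rightarrow> nat + nat \<Rightarrow> real" where
  "match_dist n k I x =
     (let \<mu> = (SOME \<mu>. stable n k I \<mu>) in
       case x of Inl m \<Rightarrow> dw k (mprof I m) (wprof I (\<mu> m))
               | Inr w \<Rightarrow> dw k (mprof I (inv_into {..<n} \<mu> w)) (wprof I w))"

definition unique_without_ties :: "nat \<Rightarrow> nat \<Rightarrow> rinstance \<Rightarrow> bool" where
  "unique_without_ties n k I \<longleftrightarrow>
     (\<exists>\<mu>. \<forall>S T. (\<forall>i<n. S i \<in> rankings n \<and> T i \<in> rankings n) \<longrightarrow>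
        {\<nu>. stable n k (I\<lparr>mtie := S, wtie := T\<rparr>) \<nu>} = {\<mu>})"

end

theory Submission
  imports Defs
begin


fun gdw :: "bool list \<Rightarrow> bool list \<Rightarrow> real" where
  "gdw (x#xs) (y#ys) = ((if x \<noteq> y then 1 else 0) + gdw xs ys) / 2"
| "gdw _ _ = 0"

lemma dw_g: "length a = k \<Longrightarrow> length b = k \<Longrightarrow> dw k a b = gdw a b"
proof (induction a b arbitrary: k rule: gdw.induct)
  case (1 x xs y ys)
  then obtain k' where k: "k = Suc k'" "length xs = k'" "length ys = k'" by auto
  have "dw k (x#xs) (y#ys) = (\<Sum>i\<in>{1..Suc k'}. (1/2) ^ i * (if (x#xs) ! (i - 1) \<noteq> (y#ys) ! (i - 1) then 1 else 0))"
    by (simp add: dw_def k)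
  also have "\<dots> = (1/2) * (if x \<noteq> y then 1 else 0) + (\<Sum>i\<in>{Suc 1..Suc k'}. (1/2) ^ i * (if (x#xs) ! (i - 1) \<noteq> (y#ys) ! (i - 1) then 1 else 0))"
    by (subst sum.atLeast_Suc_atMost) auto
  also have "(\<Sum>i\<in>{Suc 1..Suc k'}. (1/2) ^ i * (if (x#xs) ! (i - 1) \<noteq> (y#ys) ! (i - 1) then 1 else 0))
     = (\<Sum>i\<in>{1..k'}. (1/2) ^ Suc i * (if (x#xs) ! i \<noteq> (y#ys) ! i then 1 else (0::real)))"
    by (subst sum.shift_bounds_cl_Suc_ivl) simp
  also have "\<dots> = (1/2) * (\<Sum>i\<in>{1..k'}. (1/2) ^ i * (if xs ! (i - 1) \<noteq> ys ! (i - 1) then 1 else (0::real)))"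
    by (subst sum_distrib_left, rule sum.cong) auto
  also have "(\<Sum>i\<in>{1..k'}. (1/2) ^ i * (if xs ! (i - 1) \<noteq> ys ! (i - 1) then 1 else (0::real))) = gdw xs ys"
    using 1 k by (simp add: dw_def)
  finally show ?case by simp
next
  case ("2_1" uu)
  then show ?case by (simp add: dw_def)
next
  case ("2_2" uu)
  then show ?case by (simp add: dw_def)
qed

lemma g_bounds: "length a = length b \<Longrightarrow> 0 \<le> gdw a b \<and> gdw a b < 1"
  by (induction a b rule: gdw.induct) auto

lemma g_prefix: "length a = length b \<Longrightarrow> j \<le> length a \<Longrightarrow> gdw a b < (1/2)^j \<longleftrightarrow> take j a = take j b"
proof (induction j arbitrary: a b)
  case 0
  then show ?case using g_bounds[of a b] by simp
next
  case (Suc j)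
  then obtain x xs y ys where ab: "a = x#xs" "b = y#ys" by (cases a; cases b) auto
  have L: "length xs = length ys" "j \<le> length xs" using Suc.prems ab by auto
  have b: "0 \<le> gdw xs ys" "gdw xs ys < 1" using g_bounds[OF L(1)] by auto
  have p: "(1/2::real)^j \<le> 1" by (simp add: power_le_one)
  show ?case
  proof (cases "x = y")
    case True
    then show ?thesis using Suc.IH[OF L] ab by simp
  next
    case False
    then show ?thesis using ab b p by simp
  qed
qed

lemma g_inj: "length a = length b \<Longrightarrow> length a = length c \<Longrightarrow> gdw a b = gdw a c \<Longrightarrow> b = c"
proof (induction a arbitrary: b c)
  case Nil
  then show ?case by simp
next
  case (Cons x xs)
  then obtain y ys z zs where bc: "b = y#ys" "c = z#zs" by (cases b; cases c) auto
  have L: "length xs = length ys" "length xs = length zs" using Cons.prems bc by auto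
  have b1: "0 \<le> gdw xs ys" "gdw xs ys < 1" using g_bounds[OF L(1)] by auto
  have b2: "0 \<le> gdw xs zs" "gdw xs zs < 1" using g_bounds[OF L(2)] by auto
  have e: "(if x \<noteq> y then 1 else 0) + gdw xs ys = (if x \<noteq> z then 1 else 0) + gdw xs zs"
    using Cons.prems(3) bc by simp
  have yz: "y = z" using e b1 b2 by (cases x; cases y; cases z; auto)
  then have "gdw xs ys = gdw xs zs" using e by simp
  then show ?case using Cons.IH[OF L] yz bc by simp
qed

lemma dw_sym: "dw k a b = dw k b a"
  unfolding dw_def by (intro sum.cong) auto

lemma dw_prefix: "length a = k \<Longrightarrow> length b = k \<Longrightarrow> j \<le> k \<Longrightarrow>
   dw k a b < (1/2)^j \<longleftrightarrow> take j a = take j b"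
  using g_prefix dw_g by simp

lemma dw_inj: "length a = k \<Longrightarrow> length b = k \<Longrightarrow> length c = k \<Longrightarrow> dw k a b = dw k a c \<Longrightarrow> b = c"
  using g_inj dw_g by simp

lemma dw_nonneg: "0 \<le> dw k a b"
  unfolding dw_def by (intro sum_nonneg) auto


lemma rank_iff:
  fixes P :: "'a \<Rightarrow> 'a \<Rightarrow> bool"
  assumes fin: "finite A" and irr: "\<And>x. \<not> P x x" and tr: "\<And>x y z. P x y \<Longrightarrow> P y z \<Longrightarrow> P x z"
    and tot: "\<And>x y. x \<in> A \<Longrightarrow> y \<in> A \<Longrightarrow> x \<noteq> y \<Longrightarrow> P x y \<or> P y x"
    and xy: "x \<in> A" "y \<in> A"
  shows "P x y \<longleftrightarrow> card {z\<in>A. P z x} < card {z\<in>A. P z y}"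
proof -
  have fwd: "card {z\<in>A. P z a} < card {z\<in>A. P z b}" if "P a b" "b \<in> A" "a \<in> A" for a b
  proof (rule psubset_card_mono)
    show "finite {z\<in>A. P z b}" using fin by simp
    have "{z\<in>A. P z a} \<subseteq> {z\<in>A. P z b}" using that(1) tr by auto
    moreover have "a \<in> {z\<in>A. P z b}" "a \<notin> {z\<in>A. P z a}" using that irr by auto
    ultimately show "{z\<in>A. P z a} \<subset> {z\<in>A. P z b}" by blast
  qed
  show ?thesis
  proof
    assume "P x y" then show "card {z\<in>A. P z x} < card {z\<in>A. P z y}" using fwd xy by blast
  next
    assume c: "card {z\<in>A. P z x} < card {z\<in>A. P z y}"
    show "P x y"
    proof (rule ccontr)
      assume "\<not> P x y"
      moreover have "x \<noteq> y" using c by auto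
      ultimately have "P y x" using tot xy by blast
      then show False using fwd[of y x] xy c by simp
    qed
  qed
qed

lemma rank_inj:
  fixes P :: "'a \<Rightarrow> 'a \<Rightarrow> bool"
  assumes fin: "finite A" and irr: "\<And>x. \<not> P x x" and tr: "\<And>x y z. P x y \<Longrightarrow> P y z \<Longrightarrow> P x z"
    and tot: "\<And>x y. x \<in> A \<Longrightarrow> y \<in> A \<Longrightarrow> x \<noteq> y \<Longrightarrow> P x y \<or> P y x"
  shows "inj_on (\<lambda>x. card {z\<in>A. P z x}) A"
proof (rule inj_onI)
  fix x y assume xy: "x \<in> A" "y \<in> A" and e: "card {z\<in>A. P z x} = card {z\<in>A. P z y}"
  show "x = y"
  proof (rule ccontr)
    assume "x \<noteq> y"
    then have "P x y \<or> P y x" using tot xy by blast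
    moreover have "P x y \<longleftrightarrow> card {z\<in>A. P z x} < card {z\<in>A. P z y}"
      by (rule rank_iff[OF fin irr tr tot xy])
    moreover have "P y x \<longleftrightarrow> card {z\<in>A. P z y} < card {z\<in>A. P z x}"
      by (rule rank_iff[OF fin irr tr tot xy(2,1)])
    ultimately show False using e by simp
  qed
qed

lemma DA:
  fixes A :: "nat set" and rm rw :: "nat \<Rightarrow> nat \<Rightarrow> nat"
  assumes fin: "finite A" and injm: "\<And>m. m \<in> A \<Longrightarrow> inj_on (rm m) A"
    and injw: "\<And>w. w \<in> A \<Longrightarrow> inj_on (rw w) A"
  shows "\<exists>\<mu>. \<mu> ` A = A \<and> inj_on \<mu> A \<and>
     (\<forall>m\<in>A. \<forall>w\<in>A. rm m w < rm m (\<mu> m) \<longrightarrow> \<not> rw w m < rw w (inv_into A \<mu> w))"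
proof -
  define prp where "prp R m = (SOME w. w \<in> A - R m \<and> (\<forall>w'\<in>A - R m. rm m w \<le> rm m w'))"
    for R :: "nat \<Rightarrow> nat set" and m
  have propP: "prp R m \<in> A - R m \<and> (\<forall>w'\<in>A - R m. rm m (prp R m) \<le> rm m w')"
    if "A - R m \<noteq> {}" for R m
  proof -
    let ?S = "A - R m"
    have fS: "finite ?S" using fin by simp
    have "Min (rm m ` ?S) \<in> rm m ` ?S" using fS that by (intro Min_in) auto
    then obtain w where w: "w \<in> ?S" "rm m w = Min (rm m ` ?S)" by auto
    have "\<forall>w'\<in>?S. rm m w \<le> rm m w'" using w fS by simp
    then have "\<exists>w. w \<in> ?S \<and> (\<forall>w'\<in>?S. rm m w \<le> rm m w')" using w by blast
    then show ?thesis unfolding prp_def by (rule someI_ex)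
  qed
  define valid where "valid R \<longleftrightarrow> (\<forall>m\<in>A. R m \<subseteq> A) \<and>
     (\<forall>m\<in>A. \<forall>w\<in>R m. \<exists>m'\<in>A. A - R m' \<noteq> {} \<and> prp R m' = w \<and> rw w m' < rw w m)"
    for R
  define f where "f R = (\<Sum>m\<in>A. card (R m))" for R :: "nat \<Rightarrow> nat set"
  have v0: "valid (\<lambda>_. {})" unfolding valid_def by simp
  have bnd: "f R < card A * card A + 1" if "valid R" for R
  proof -
    have "f R \<le> (\<Sum>m\<in>A. card A)" unfolding f_def
      using that fin by (intro sum_mono card_mono) (auto simp: valid_def)
    then show ?thesis by simp
  qed
  obtain R where vR: "valid R" and maxR: "\<And>R'. valid R' \<Longrightarrow> f R' \<le> f R"
    using ex_has_greatest_nat[of valid "\<lambda>_. {}" f "card A * card A + 1"] v0 bnd by blast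
  have RA: "R m \<subseteq> A" if "m \<in> A" for m using vR that by (auto simp: valid_def)
  have step: False if m12: "m1 \<in> A" "m2 \<in> A" "m1 \<noteq> m2" and av: "A - R m1 \<noteq> {}" "A - R m2 \<noteq> {}"
    and pw: "prp R m1 = w" "prp R m2 = w" and lt: "rw w m1 < rw w m2" for m1 m2 w
  proof -
    define R' where "R' = R(m2 := insert w (R m2))"
    have wA: "w \<in> A" "w \<notin> R m2" using propP[of R m2, OF av(2)] pw by auto
    have same: "R' m = R m" "prp R' m = prp R m" if "m \<noteq> m2" for m
      using that unfolding R'_def prp_def by auto
    have "valid R'"
      unfolding valid_def
    proof (intro conjI ballI)
      fix m assume "m \<in> A" then show "R' m \<subseteq> A" using RA wA by (auto simp: R'_def)
    next
      fix m w'' assume mA: "m \<in> A" and w'': "w'' \<in> R' m"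
      show "\<exists>m'\<in>A. A - R' m' \<noteq> {} \<and> prp R' m' = w'' \<and> rw w'' m' < rw w'' m"
      proof (cases "m = m2 \<and> w'' = w")
        case True
        then show ?thesis using m12 av pw lt same[of m1] by auto
      next
        case False
        then have "w'' \<in> R m" using w'' by (auto simp: R'_def split: if_splits)
        then obtain m' where m': "m' \<in> A" "A - R m' \<noteq> {}" "prp R m' = w''" "rw w'' m' < rw w'' m"
          using vR mA unfolding valid_def by blast
        show ?thesis
        proof (cases "m' = m2")
          case False
          then show ?thesis using m' same[of m'] by auto
        next
          case True
          then have "w'' = w" using m' pw by simp
          then have "rw w'' m1 < rw w'' m" using lt m' True by simp
          moreover have "A - R' m1 \<noteq> {}" "prp R' m1 = w''" using same[of m1] m12 av pw \<open>w'' = w\<close> by auto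
          ultimately show ?thesis using m12 by blast
        qed
      qed
    qed
    then have le: "f R' \<le> f R" by (rule maxR)
    have "f R' = (\<Sum>m\<in>A. card (R m) + (if m = m2 then 1 else 0))"
      unfolding f_def
    proof (intro sum.cong refl)
      fix m assume "m \<in> A"
      show "card (R' m) = card (R m) + (if m = m2 then 1 else 0)"
      proof (cases "m = m2")
        case True
        have "finite (R m2)" using RA[OF m12(2)] fin finite_subset by blast
        then show ?thesis using True wA by (simp add: R'_def)
      qed (simp add: same)
    qed
    also have "\<dots> = f R + 1" unfolding f_def using m12 fin by (simp add: sum.distrib)
    finally show False using le by simp
  qed
  have uniq: "m1 = m2" if "m1 \<in> A" "m2 \<in> A" "A - R m1 \<noteq> {}" "A - R m2 \<noteq> {}" "prp R m1 = prp R m2" for m1 m2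
  proof (rule ccontr)
    assume ne: "m1 \<noteq> m2"
    let ?w = "prp R m1"
    have wA: "?w \<in> A" using propP[of R m1, OF that(3)] by auto
    have "rw ?w m1 \<noteq> rw ?w m2" using inj_onD[OF injw[OF wA] _ that(1,2)] ne by blast
    then have "rw ?w m1 < rw ?w m2 \<or> rw ?w m2 < rw ?w m1" by arith
    then show False
    proof
      assume "rw ?w m1 < rw ?w m2"
      then show False using step[OF that(1,2) ne that(3,4) refl that(5)[symmetric]] by simp
    next
      assume "rw ?w m2 < rw ?w m1"
      then show False using step[OF that(2,1) ne[symmetric] that(4,3) that(5)[symmetric] refl] by simp
    qed
  qed
  have allp: "A - R m \<noteq> {}" if mA: "m \<in> A" for m
  proof (rule ccontr)
    assume "\<not> A - R m \<noteq> {}"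
    then have Am: "A \<subseteq> R m" by auto
    define P where "P = {m'\<in>A. A - R m' \<noteq> {}}"
    have "A \<subseteq> prp R ` P"
    proof
      fix w assume "w \<in> A"
      then have "w \<in> R m" using Am by auto
      then obtain m' where "m' \<in> A" "A - R m' \<noteq> {}" "prp R m' = w"
        using vR mA unfolding valid_def by blast
      then show "w \<in> prp R ` P" unfolding P_def by auto
    qed
    then have "card A \<le> card (prp R ` P)" using fin P_def by (intro card_mono) auto
    also have "\<dots> \<le> card P" by (rule card_image_le) (use fin P_def in simp)
    also have "P \<subseteq> A - {m}" unfolding P_def using Am by auto
    then have "card P \<le> card (A - {m})" using fin by (intro card_mono) auto
    also have "card (A - {m}) < card A" using mA fin by (meson card_Diff1_less)
    finally show False by simp
  qed
  define \<mu> where "\<mu> = prp R"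
  have inj: "inj_on \<mu> A" unfolding \<mu>_def using uniq allp by (intro inj_onI) auto
  have sub: "\<mu> ` A \<subseteq> A"
  proof
    fix w assume "w \<in> \<mu> ` A"
    then obtain m where "m \<in> A" "w = prp R m" unfolding \<mu>_def by auto
    then show "w \<in> A" using propP[of R m, OF allp] by auto
  qed
  have img: "\<mu> ` A = A"
    using card_image[OF inj] sub fin by (intro card_subset_eq) auto
  have nb: "\<not> rw w m < rw w (inv_into A \<mu> w)" if mw: "m \<in> A" "w \<in> A" "rm m w < rm m (\<mu> m)" for m w
  proof -
    have "w \<in> R m"
    proof (rule ccontr)
      assume "w \<notin> R m"
      then have "rm m (\<mu> m) \<le> rm m w" using propP[of R m, OF allp[OF mw(1)]] mw unfolding \<mu>_def by auto
      then show False using mw by simp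
    qed
    then obtain m' where m': "m' \<in> A" "prp R m' = w" "rw w m' < rw w m"
      using vR mw unfolding valid_def by blast
    have "inv_into A \<mu> w = m'" using m' inj unfolding \<mu>_def by (metis inv_into_f_f)
    then show ?thesis using m' by simp
  qed
  show ?thesis using img inj nb by blast
qed


definition wfI :: "nat \<Rightarrow> nat \<Rightarrow> rinstance \<Rightarrow> bool" where
  "wfI n k I \<longleftrightarrow> (\<forall>i<n. length (mprof I i) = k \<and> length (wprof I i) = k \<and>
      mtie I i \<in> rankings n \<and> wtie I i \<in> rankings n)"

lemma rankings_inj: "r \<in> rankings n \<Longrightarrow> inj_on r {..<n}"
  unfolding rankings_def bij_betw_def by auto

lemma mpref_irr: "\<not> mprefers k I m w w"
  unfolding mprefers_def by auto
lemma wpref_irr: "\<not> wprefers k I w m m"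
  unfolding wprefers_def by auto
lemma mpref_trans: "mprefers k I m a b \<Longrightarrow> mprefers k I m b c \<Longrightarrow> mprefers k I m a c"
  unfolding mprefers_def by auto
lemma wpref_trans: "wprefers k I w a b \<Longrightarrow> wprefers k I w b c \<Longrightarrow> wprefers k I w a c"
  unfolding wprefers_def by auto
lemma mpref_tot: "wfI n k I \<Longrightarrow> m < n \<Longrightarrow> a \<in> {..<n} \<Longrightarrow> b \<in> {..<n} \<Longrightarrow> a \<noteq> b \<Longrightarrow>
   mprefers k I m a b \<or> mprefers k I m b a"
proof -
  assume h: "wfI n k I" "m < n" "a \<in> {..<n}" "b \<in> {..<n}" "a \<noteq> b"
  then have "inj_on (mtie I m) {..<n}" unfolding wfI_def using rankings_inj by blast
  then have "mtie I m a \<noteq> mtie I m b" using h by (meson inj_onD)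
  then show ?thesis unfolding mprefers_def by linarith
qed
lemma wpref_tot: "wfI n k I \<Longrightarrow> w < n \<Longrightarrow> a \<in> {..<n} \<Longrightarrow> b \<in> {..<n} \<Longrightarrow> a \<noteq> b \<Longrightarrow>
   wprefers k I w a b \<or> wprefers k I w b a"
proof -
  assume h: "wfI n k I" "w < n" "a \<in> {..<n}" "b \<in> {..<n}" "a \<noteq> b"
  then have "inj_on (wtie I w) {..<n}" unfolding wfI_def using rankings_inj by blast
  then have "wtie I w a \<noteq> wtie I w b" using h by (meson inj_onD)
  then show ?thesis unfolding wprefers_def by linarith
qed

lemma mpref_le: "mprefers k I m a b \<Longrightarrow> dw k (mprof I m) (wprof I a) \<le> dw k (mprof I m) (wprof I b)"
  unfolding mprefers_def by auto
lemma wpref_le: "wprefers k I w a b \<Longrightarrow> dw k (wprof I w) (mprof I a) \<le> dw k (wprof I w) (mprof I b)"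
  unfolding wprefers_def by auto

lemma stable_exists:
  assumes wf: "wfI n k I"
  shows "\<exists>\<mu>. stable n k I \<mu>"
proof -
  let ?A = "{..<n}"
  define rm where "rm m w = card {z\<in>?A. mprefers k I m z w}" for m w
  define rw where "rw w m = card {z\<in>?A. wprefers k I w z m}" for w m
  have rmi: "mprefers k I m a b \<longleftrightarrow> rm m a < rm m b" if "m \<in> ?A" "a \<in> ?A" "b \<in> ?A" for m a b
    unfolding rm_def
    by (rule rank_iff[where P="mprefers k I m"]) (use that mpref_irr mpref_trans mpref_tot[OF wf] in auto)
  have rwi: "wprefers k I w a b \<longleftrightarrow> rw w a < rw w b" if "w \<in> ?A" "a \<in> ?A" "b \<in> ?A" for w a b
    unfolding rw_def
    by (rule rank_iff[where P="wprefers k I w"]) (use that wpref_irr wpref_trans wpref_tot[OF wf] in auto)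
  have injm: "inj_on (rm m) ?A" if "m \<in> ?A" for m
    unfolding rm_def
    by (rule rank_inj[where P="mprefers k I m"]) (use that mpref_irr mpref_trans mpref_tot[OF wf] in auto)
  have injw: "inj_on (rw w) ?A" if "w \<in> ?A" for w
    unfolding rw_def
    by (rule rank_inj[where P="wprefers k I w"]) (use that wpref_irr wpref_trans wpref_tot[OF wf] in auto)
  obtain \<mu> where img: "\<mu> ` ?A = ?A" and inj: "inj_on \<mu> ?A"
    and nb: "\<And>m w. m \<in> ?A \<Longrightarrow> w \<in> ?A \<Longrightarrow> rm m w < rm m (\<mu> m) \<Longrightarrow> \<not> rw w m < rw w (inv_into ?A \<mu> w)"
    using DA[of ?A rm rw] injm injw by auto
  define \<mu>' where "\<mu>' = restrict \<mu> ?A"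
  have inv: "inv_into ?A \<mu>' w = inv_into ?A \<mu> w" for w
    unfolding inv_into_def \<mu>'_def by (rule arg_cong[where f=Eps]) (auto simp: fun_eq_iff)
  have bij: "bij_betw \<mu> ?A ?A" using img inj by (simp add: bij_betw_def)
  have m1: "matching n \<mu>'"
    unfolding matching_def \<mu>'_def
  proof
    show "restrict \<mu> ?A \<in> ?A \<rightarrow>\<^sub>E ?A" using img by auto
    show "bij_betw (restrict \<mu> ?A) ?A ?A" using bij by (simp add: bij_betw_def inj_on_def)
  qed
  have "\<not> (mprefers k I m w (\<mu>' m) \<and> wprefers k I w m (inv_into ?A \<mu>' w))" if "m < n" "w < n" for m w
  proof
    assume a: "mprefers k I m w (\<mu>' m) \<and> wprefers k I w m (inv_into ?A \<mu>' w)"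
    have mA: "m \<in> ?A" "w \<in> ?A" "\<mu> m \<in> ?A" using that img by auto
    have iA: "inv_into ?A \<mu> w \<in> ?A" using img mA by (metis inv_into_into)
    have "rm m w < rm m (\<mu> m)" using a rmi[OF mA(1,2,3)] mA by (simp add: \<mu>'_def)
    moreover have "rw w m < rw w (inv_into ?A \<mu> w)" using a rwi[OF mA(2,1) iA] inv by simp
    ultimately show False using nb mA by blast
  qed
  then have "stable n k I \<mu>'" unfolding stable_def using m1 by blast
  then show ?thesis by blast
qed


lemma stable_facts:
  assumes "stable n k I \<mu>"
  shows "\<mu> \<in> {..<n} \<rightarrow>\<^sub>E {..<n}" "bij_betw \<mu> {..<n} {..<n}"
    "\<And>m. m < n \<Longrightarrow> \<mu> m < n"
    "\<And>w. w < n \<Longrightarrow> inv_into {..<n} \<mu> w < n"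
    "\<And>w. w < n \<Longrightarrow> \<mu> (inv_into {..<n} \<mu> w) = w"
    "\<And>m. m < n \<Longrightarrow> inv_into {..<n} \<mu> (\<mu> m) = m"
    "\<And>m w. m < n \<Longrightarrow> w < n \<Longrightarrow> mprefers k I m w (\<mu> m) \<Longrightarrow> \<not> wprefers k I w m (inv_into {..<n} \<mu> w)"
proof -
  have M: "matching n \<mu>" using assms unfolding stable_def by blast
  show P: "\<mu> \<in> {..<n} \<rightarrow>\<^sub>E {..<n}" "bij_betw \<mu> {..<n} {..<n}" using M unfolding matching_def by auto
  show "\<And>m. m < n \<Longrightarrow> \<mu> m < n" using P by auto
  show "\<And>w. w < n \<Longrightarrow> inv_into {..<n} \<mu> w < n"
    using P(2) by (metis bij_betw_def inv_into_into lessThan_iff)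
  show "\<And>w. w < n \<Longrightarrow> \<mu> (inv_into {..<n} \<mu> w) = w"
    using P(2) by (metis bij_betw_def f_inv_into_f lessThan_iff)
  show "\<And>m. m < n \<Longrightarrow> inv_into {..<n} \<mu> (\<mu> m) = m"
    using P(2) by (metis bij_betw_def inv_into_f_f lessThan_iff)
  show "\<And>m w. m < n \<Longrightarrow> w < n \<Longrightarrow> mprefers k I m w (\<mu> m) \<Longrightarrow> \<not> wprefers k I w m (inv_into {..<n} \<mu> w)"
    using assms unfolding stable_def by blast
qed

lemma perm_cycle:
  fixes \<sigma> :: "'a \<Rightarrow> 'a"
  assumes fin: "finite A" and inj: "inj_on \<sigma> A" and sub: "\<And>x. x \<in> A \<Longrightarrow> \<sigma> x \<in> A" and mA: "m \<in> A"
  shows "\<exists>p>0. (\<sigma>^^p) m = m"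
proof -
  have inA: "(\<sigma>^^i) z \<in> A" if "z \<in> A" for i z
    using that by (induction i) (auto simp: sub)
  have cancel: "z = m" if "z \<in> A" "(\<sigma>^^i) z = (\<sigma>^^i) m" for i z
    using that
  proof (induction i)
    case 0 then show ?case by simp
  next
    case (Suc i)
    have "\<sigma> ((\<sigma>^^i) z) = \<sigma> ((\<sigma>^^i) m)" using Suc.prems by simp
    then have "(\<sigma>^^i) z = (\<sigma>^^i) m" using inj inA[OF Suc.prems(1)] inA[OF mA] by (meson inj_onD)
    then show ?case using Suc.IH Suc.prems by blast
  qed
  define f where "f i = (\<sigma>^^i) m" for i
  have "\<not> inj_on f {..card A}"
  proof
    assume "inj_on f {..card A}"
    then have "card (f ` {..card A}) = Suc (card A)" by (simp add: card_image)
    moreover have "f ` {..card A} \<subseteq> A" using inA mA f_def by auto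
    then have "card (f ` {..card A}) \<le> card A" using fin by (simp add: card_mono)
    ultimately show False by simp
  qed
  then obtain i j where ij: "i \<noteq> j" "f i = f j" unfolding inj_on_def by blast
  have "\<exists>i j. i < j \<and> f i = f j"
    using ij by (metis linorder_neqE_nat)
  then obtain i j where ij: "i < j" "f i = f j" by blast
  have "(\<sigma>^^i) ((\<sigma>^^(j-i)) m) = (\<sigma>^^j) m"
    using ij(1) by (metis funpow_add le_add_diff_inverse less_imp_le o_apply)
  then have "(\<sigma>^^i) ((\<sigma>^^(j-i)) m) = (\<sigma>^^i) m" using ij(2) f_def by simp
  then have "(\<sigma>^^(j-i)) m = m" using cancel[OF inA[OF mA]] by blast
  then show ?thesis using ij(1) by (intro exI[of _ "j - i"]) auto
qed

lemma chain_core: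
  assumes wf: "wfI n k I" and s1: "stable n k I \<mu>" and s2: "stable n k I \<nu>" and mn: "m < n"
    and pm: "mprefers k I m (\<mu> m) (\<nu> m)"
  shows "wprof I (\<mu> m) = wprof I (\<nu> m) \<and> (\<exists>m'<n. m' \<noteq> m \<and> mprof I m' = mprof I m)"
proof -
  let ?A = "{..<n}"
  note F1 = stable_facts[OF s1] and F2 = stable_facts[OF s2]
  define \<sigma> where "\<sigma> x = inv_into ?A \<nu> (\<mu> x)" for x
  define D where "D x = dw k (mprof I x) (wprof I (\<mu> x))" for x
  define E where "E x = dw k (mprof I x) (wprof I (\<nu> x))" for x
  have stepL: "\<sigma> x < n \<and> \<sigma> x \<noteq> x \<and> mprefers k I (\<sigma> x) (\<mu> (\<sigma> x)) (\<nu> (\<sigma> x)) \<and> E (\<sigma> x) \<le> D x"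
    if x: "x < n" "mprefers k I x (\<mu> x) (\<nu> x)" for x
  proof -
    let ?w = "\<mu> x"
    have wn: "?w < n" using F1(3) x by blast
    have sn: "\<sigma> x < n" unfolding \<sigma>_def using F2(4) wn by blast
    have nus: "\<nu> (\<sigma> x) = ?w" unfolding \<sigma>_def using F2(5) wn by blast
    have ne: "\<sigma> x \<noteq> x"
    proof
      assume "\<sigma> x = x"
      then have "\<nu> x = \<mu> x" using nus by simp
      then show False using x(2) by (simp add: mpref_irr)
    qed
    have "\<not> wprefers k I ?w x (\<sigma> x)" using F2(7)[OF x(1) wn] x(2) unfolding \<sigma>_def by blast
    then have wp: "wprefers k I ?w (\<sigma> x) x" using wpref_tot[OF wf wn, of x "\<sigma> x"] x sn ne by auto
    have "inv_into ?A \<mu> ?w = x" using F1(6) x by blast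
    then have "\<not> mprefers k I (\<sigma> x) ?w (\<mu> (\<sigma> x))" using F1(7)[OF sn wn] wp by auto
    moreover have "?w \<noteq> \<mu> (\<sigma> x)"
    proof
      assume "?w = \<mu> (\<sigma> x)"
      then have "inv_into ?A \<mu> ?w = inv_into ?A \<mu> (\<mu> (\<sigma> x))" by simp
      then show False using F1(6)[OF sn] F1(6)[OF x(1)] ne by simp
    qed
    moreover have "\<mu> (\<sigma> x) < n" using F1(3) sn by blast
    ultimately have "mprefers k I (\<sigma> x) (\<mu> (\<sigma> x)) ?w"
      using mpref_tot[OF wf sn, of ?w "\<mu> (\<sigma> x)"] wn by auto
    moreover have "E (\<sigma> x) \<le> D x"
      using wpref_le[OF wp] nus unfolding E_def D_def by (simp add: dw_sym)
    ultimately show ?thesis using sn ne nus by simp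
  qed
  have DE: "D x \<le> E x" if "mprefers k I x (\<mu> x) (\<nu> x)" for x
    using mpref_le[OF that] unfolding D_def E_def .
  have iter: "(\<sigma>^^i) m < n \<and> mprefers k I ((\<sigma>^^i) m) (\<mu> ((\<sigma>^^i) m)) (\<nu> ((\<sigma>^^i) m))" for i
  proof (induction i)
    case 0 then show ?case using mn pm by simp
  next
    case (Suc i)
    have "(\<sigma>^^Suc i) m = \<sigma> ((\<sigma>^^i) m)" by simp
    then show ?case using stepL[of "(\<sigma>^^i) m"] Suc.IH by simp
  qed
  have mono: "E ((\<sigma>^^Suc i) m) \<le> E (\<sigma> m)" for i
  proof (induction i)
    case 0 then show ?case by simp
  next
    case (Suc i)
    have e1: "(\<sigma>^^Suc (Suc i)) m = \<sigma> ((\<sigma>^^Suc i) m)" by simp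
    have "E ((\<sigma>^^Suc (Suc i)) m) \<le> D ((\<sigma>^^Suc i) m)"
      unfolding e1 using stepL[of "(\<sigma>^^Suc i) m"] iter[of "Suc i"] by blast
    also have "\<dots> \<le> E ((\<sigma>^^Suc i) m)" using DE iter[of "Suc i"] by blast
    finally show ?case using Suc.IH by simp
  qed
  have injs: "inj_on \<sigma> ?A"
  proof (rule inj_onI)
    fix x y assume "x \<in> ?A" "y \<in> ?A" "\<sigma> x = \<sigma> y"
    then have "\<nu> (\<sigma> x) = \<nu> (\<sigma> y)" by simp
    then have "\<mu> x = \<mu> y" unfolding \<sigma>_def using F2(5) F1(3) \<open>x \<in> ?A\<close> \<open>y \<in> ?A\<close> by auto
    then show "x = y" using F1(6) \<open>x \<in> ?A\<close> \<open>y \<in> ?A\<close> by (metis lessThan_iff)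
  qed
  obtain p where p: "p > 0" "(\<sigma>^^p) m = m"
    using perm_cycle[of ?A \<sigma> m] injs mn F1(3) F2(4) unfolding \<sigma>_def by auto
  have "E m = E ((\<sigma>^^Suc (p - 1)) m)" using p by simp
  also have "\<dots> \<le> E (\<sigma> m)" by (rule mono)
  finally have c1: "E m \<le> E (\<sigma> m)" .
  have c2: "E (\<sigma> m) \<le> D m" "\<sigma> m < n" "\<sigma> m \<noteq> m" "\<nu> (\<sigma> m) = \<mu> m" using stepL[OF mn pm]
    unfolding \<sigma>_def using F2(5) F1(3) mn by auto
  have c3: "D m \<le> E m" using DE pm by blast
  have len: "length (mprof I x) = k" "length (wprof I x) = k" if "x < n" for x
    using wf that unfolding wfI_def by auto
  have "D m = E m" using c1 c2 c3 by simp
  then have "wprof I (\<mu> m) = wprof I (\<nu> m)" unfolding D_def E_def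
    by (rule dw_inj[OF len(1)[OF mn] len(2)[OF F1(3)[OF mn]] len(2)[OF F2(3)[OF mn]]])
  moreover have "dw k (wprof I (\<mu> m)) (mprof I (\<sigma> m)) = dw k (wprof I (\<mu> m)) (mprof I m)"
    using c1 c2 c3 unfolding D_def E_def by (simp add: dw_sym)
  then have "mprof I (\<sigma> m) = mprof I m"
    by (rule dw_inj[OF len(2)[OF F1(3)[OF mn]] len(1)[OF c2(2)] len(1)[OF mn]])
  ultimately show ?thesis using c2 by blast
qed

lemma chain:
  assumes wf: "wfI n k I" and s1: "stable n k I \<mu>" and s2: "stable n k I \<nu>" and mn: "m < n"
    and ne: "\<mu> m \<noteq> \<nu> m"
  shows "wprof I (\<mu> m) = wprof I (\<nu> m) \<and> (\<exists>m'<n. m' \<noteq> m \<and> mprof I m' = mprof I m)"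
proof -
  have "\<mu> m < n" "\<nu> m < n" using stable_facts(3)[OF s1] stable_facts(3)[OF s2] mn by auto
  then have "mprefers k I m (\<mu> m) (\<nu> m) \<or> mprefers k I m (\<nu> m) (\<mu> m)"
    using mpref_tot[OF wf mn] ne by auto
  then show ?thesis
  proof
    assume "mprefers k I m (\<mu> m) (\<nu> m)"
    then show ?thesis using chain_core[OF wf s1 s2 mn] by blast
  next
    assume "mprefers k I m (\<nu> m) (\<mu> m)"
    then have "wprof I (\<nu> m) = wprof I (\<mu> m) \<and> (\<exists>m'<n. m' \<noteq> m \<and> mprof I m' = mprof I m)"
      by (rule chain_core[OF wf s2 s1 mn])
    then show ?thesis by simp
  qed
qed

lemma two_elems: "2 \<le> card S \<Longrightarrow> \<exists>a\<in>S. \<exists>b\<in>S. a \<noteq> b"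
proof -
  assume c: "2 \<le> card S"
  then have "S \<noteq> {}" by auto
  then obtain a where a: "a \<in> S" by auto
  have "finite S" using c card.infinite by fastforce
  then have "card (S - {a}) \<ge> 1" using c a by simp
  then have "S - {a} \<noteq> {}" by (metis card.empty not_one_le_zero)
  then show ?thesis using a by blast
qed

lemma man_multi_twin:
  assumes wf: "wfI n k I" and mn: "m < n" and c: "2 \<le> card (man_stable_partners n k I m)"
  shows "\<exists>m'<n. m' \<noteq> m \<and> mprof I m' = mprof I m"
proof -
  obtain a b where "a \<in> man_stable_partners n k I m" "b \<in> man_stable_partners n k I m" "a \<noteq> b"
    using two_elems[OF c] by blast
  then obtain \<mu> \<nu> where "stable n k I \<mu>" "stable n k I \<nu>" "\<mu> m \<noteq> \<nu> m"
    unfolding man_stable_partners_def by auto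
  then show ?thesis using chain[OF wf _ _ mn] by blast
qed

lemma woman_multi_twin:
  assumes wf: "wfI n k I" and wn: "w < n" and c: "2 \<le> card (woman_stable_partners n k I w)"
  shows "\<exists>w'<n. w' \<noteq> w \<and> wprof I w' = wprof I w"
proof -
  obtain a b where "a \<in> woman_stable_partners n k I w" "b \<in> woman_stable_partners n k I w" "a \<noteq> b"
    using two_elems[OF c] by blast
  then obtain \<mu> \<nu> where s: "stable n k I \<mu>" "stable n k I \<nu>" "\<mu> a = w" "\<nu> b = w" "a < n" "b < n" "a \<noteq> b"
    unfolding woman_stable_partners_def by auto
  have "\<nu> a \<noteq> w"
  proof
    assume "\<nu> a = w"
    then have "\<nu> a = \<nu> b" using s by simp
    have "a = inv_into {..<n} \<nu> (\<nu> a)" using stable_facts(6)[OF s(2) s(5)] by simp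
    also have "\<dots> = inv_into {..<n} \<nu> (\<nu> b)" using \<open>\<nu> a = \<nu> b\<close> by simp
    also have "\<dots> = b" using stable_facts(6)[OF s(2) s(6)] .
    finally show False using s(7) by simp
  qed
  moreover have "\<nu> a < n" using stable_facts(3)[OF s(2)] s by blast
  moreover have "wprof I (\<mu> a) = wprof I (\<nu> a)" using chain[OF wf s(1,2) s(5)] s `\<nu> a \<noteq> w` by auto
  ultimately show ?thesis using s by (intro exI[of _ "\<nu> a"]) simp
qed

lemma unique_stable:
  assumes wf: "wfI n k I" and dm: "\<And>i j. i < n \<Longrightarrow> j < n \<Longrightarrow> i \<noteq> j \<Longrightarrow> mprof I i \<noteq> mprof I j"
    and s1: "stable n k I \<mu>" and s2: "stable n k I \<nu>"
  shows "\<mu> = \<nu>"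
proof (rule ext)
  fix x
  show "\<mu> x = \<nu> x"
  proof (cases "x < n")
    case True
    show ?thesis
    proof (rule ccontr)
      assume "\<mu> x \<noteq> \<nu> x"
      then obtain m' where "m' < n" "m' \<noteq> x" "mprof I m' = mprof I x" using chain[OF wf s1 s2 True] by blast
      then show False using dm[OF \<open>m' < n\<close> True \<open>m' \<noteq> x\<close>] by simp
    qed
  next
    case False
    then have "x \<notin> {..<n}" by simp
    then show ?thesis using PiE_arb[OF stable_facts(1)[OF s1]] PiE_arb[OF stable_facts(1)[OF s2]] by simp
  qed
qed

lemma distinct_unique:
  assumes wf: "wfI n k I" and dm: "\<And>i j. i < n \<Longrightarrow> j < n \<Longrightarrow> i \<noteq> j \<Longrightarrow> mprof I i \<noteq> mprof I j"
    and dwm: "\<And>i j. i < n \<Longrightarrow> j < n \<Longrightarrow> i \<noteq> j \<Longrightarrow> wprof I i \<noteq> wprof I j"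
  shows "unique_without_ties n k I"
proof -
  obtain \<mu> where s: "stable n k I \<mu>" using stable_exists[OF wf] by blast
  have len: "length (mprof I x) = k" "length (wprof I x) = k" if "x < n" for x
    using wf that unfolding wfI_def by auto
  have "{\<nu>. stable n k (I\<lparr>mtie := S, wtie := T\<rparr>) \<nu>} = {\<mu>}"
    if ST: "\<forall>i<n. S i \<in> rankings n \<and> T i \<in> rankings n" for S T
  proof -
    let ?J = "I\<lparr>mtie := S, wtie := T\<rparr>"
    have wfJ: "wfI n k ?J" using wf ST unfolding wfI_def by auto
    have mp: "mprefers k ?J m a b \<longleftrightarrow> mprefers k I m a b" if "m < n" "a < n" "b < n" for m a b
    proof (cases "a = b")
      case True then show ?thesis using mpref_irr by metis
    next
      case False
      have "dw k (mprof I m) (wprof I a) \<noteq> dw k (mprof I m) (wprof I b)"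
      proof
        assume "dw k (mprof I m) (wprof I a) = dw k (mprof I m) (wprof I b)"
        then have "wprof I a = wprof I b" by (rule dw_inj[OF len(1)[OF that(1)] len(2)[OF that(2)] len(2)[OF that(3)]])
        then show False using dwm[OF that(2,3) False] by blast
      qed
      then show ?thesis unfolding mprefers_def by auto
    qed
    have wp: "wprefers k ?J w a b \<longleftrightarrow> wprefers k I w a b" if "w < n" "a < n" "b < n" for w a b
    proof (cases "a = b")
      case True then show ?thesis using wpref_irr by metis
    next
      case False
      have "dw k (wprof I w) (mprof I a) \<noteq> dw k (wprof I w) (mprof I b)"
      proof
        assume "dw k (wprof I w) (mprof I a) = dw k (wprof I w) (mprof I b)"
        then have "mprof I a = mprof I b" by (rule dw_inj[OF len(2)[OF that(1)] len(1)[OF that(2)] len(1)[OF that(3)]])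
        then show False using dm[OF that(2,3) False] by blast
      qed
      then show ?thesis unfolding wprefers_def by auto
    qed
    have eq: "stable n k ?J \<nu> \<longleftrightarrow> stable n k I \<nu>" for \<nu>
    proof (cases "matching n \<nu>")
      case True
      then have P: "\<nu> \<in> {..<n} \<rightarrow>\<^sub>E {..<n}" "bij_betw \<nu> {..<n} {..<n}" unfolding matching_def by auto
      have r1: "\<And>m. m < n \<Longrightarrow> \<nu> m < n" using P by auto
      have r2: "\<And>w. w < n \<Longrightarrow> inv_into {..<n} \<nu> w < n"
        using P(2) by (metis bij_betw_def inv_into_into lessThan_iff)
      have "(\<exists>m<n. \<exists>w<n. mprefers k ?J m w (\<nu> m) \<and> wprefers k ?J w m (inv_into {..<n} \<nu> w)) \<longleftrightarrow>
            (\<exists>m<n. \<exists>w<n. mprefers k I m w (\<nu> m) \<and> wprefers k I w m (inv_into {..<n} \<nu> w))"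
      proof -
        have e: "(mprefers k ?J m w (\<nu> m) \<and> wprefers k ?J w m (inv_into {..<n} \<nu> w)) \<longleftrightarrow>
           (mprefers k I m w (\<nu> m) \<and> wprefers k I w m (inv_into {..<n} \<nu> w))" if "m < n" "w < n" for m w
          using mp[OF that(1) that(2) r1[OF that(1)]] wp[OF that(2) that(1) r2[OF that(2)]] by simp
        show ?thesis
        proof
          assume "\<exists>m<n. \<exists>w<n. mprefers k ?J m w (\<nu> m) \<and> wprefers k ?J w m (inv_into {..<n} \<nu> w)"
          then obtain m w where "m < n" "w < n" "mprefers k ?J m w (\<nu> m) \<and> wprefers k ?J w m (inv_into {..<n} \<nu> w)" by blast
          then show "\<exists>m<n. \<exists>w<n. mprefers k I m w (\<nu> m) \<and> wprefers k I w m (inv_into {..<n} \<nu> w)" using e by blast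
        next
          assume "\<exists>m<n. \<exists>w<n. mprefers k I m w (\<nu> m) \<and> wprefers k I w m (inv_into {..<n} \<nu> w)"
          then obtain m w where "m < n" "w < n" "mprefers k I m w (\<nu> m) \<and> wprefers k I w m (inv_into {..<n} \<nu> w)" by blast
          then show "\<exists>m<n. \<exists>w<n. mprefers k ?J m w (\<nu> m) \<and> wprefers k ?J w m (inv_into {..<n} \<nu> w)" using e by blast
        qed
      qed
      then show ?thesis unfolding stable_def using True by simp
    next
      case False
      then show ?thesis unfolding stable_def by simp
    qed
    show ?thesis
    proof (intro equalityI subsetI)
      fix \<nu> assume "\<nu> \<in> {\<nu>. stable n k ?J \<nu>}"
      then have "stable n k I \<nu>" using eq by simp
      then have "\<nu> = \<mu>" using unique_stable[OF wf dm _ s] by blast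
      then show "\<nu> \<in> {\<mu>}" by simp
    next
      fix \<nu> assume "\<nu> \<in> {\<mu>}"
      then show "\<nu> \<in> {\<nu>. stable n k ?J \<nu>}" using eq s by simp
    qed
  qed
  then show ?thesis unfolding unique_without_ties_def by blast
qed


definition Lk :: "nat \<Rightarrow> bool list set" where "Lk k = {xs. length xs = k}"

lemma card_Lk: "card (Lk m) = 2 ^ m"
proof -
  have "Lk m = {xs. set xs \<subseteq> (UNIV :: bool set) \<and> length xs = m}" unfolding Lk_def by auto
  then show ?thesis using card_lists_length_eq[of "UNIV :: bool set" m] by simp
qed

lemma finite_Lk: "finite (Lk m)"
proof -
  have "Lk m = {xs. set xs \<subseteq> (UNIV :: bool set) \<and> length xs = m}" unfolding Lk_def by auto
  then show ?thesis using finite_lists_length_eq[of "UNIV :: bool set" m] by simp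
qed

lemma Lk_ne: "Lk m \<noteq> {}"
  unfolding Lk_def by (auto intro!: exI[of _ "replicate m True"])

lemma card_prefix:
  assumes "length p = j" "j \<le> k"
  shows "card {b \<in> Lk k. take j b = p} = 2 ^ (k - j)"
proof -
  have "bij_betw (\<lambda>c. p @ c) (Lk (k - j)) {b \<in> Lk k. take j b = p}"
  proof (rule bij_betw_imageI)
    show "inj_on ((@) p) (Lk (k - j))" by (auto simp: inj_on_def)
    show "(@) p ` Lk (k - j) = {b \<in> Lk k. take j b = p}"
    proof (intro equalityI subsetI)
      fix b assume "b \<in> (@) p ` Lk (k - j)"
      then show "b \<in> {b \<in> Lk k. take j b = p}" using assms by (auto simp: Lk_def)
    next
      fix b assume b: "b \<in> {b \<in> Lk k. take j b = p}"
      have tb: "take j b = p" using b by simp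
      have "b = take j b @ drop j b" by simp
      then have "b = p @ drop j b" using tb by simp
      moreover have "drop j b \<in> Lk (k - j)" using b by (auto simp: Lk_def)
      ultimately show "b \<in> (@) p ` Lk (k - j)" by blast
    qed
  qed
  then have "card (Lk (k - j)) = card {b \<in> Lk k. take j b = p}" by (rule bij_betw_same_card)
  then show ?thesis using card_Lk by simp
qed

abbreviation U :: "nat \<Rightarrow> bool list pmf" where "U k \<equiv> pmf_of_set (Lk k)"

lemma profiles_pmf_U: "profiles_pmf n k = Pi_pmf {..<n} [] (\<lambda>_. U k)"
  unfolding profiles_pmf_def Lk_def by simp

lemma set_U: "set_pmf (U k) = Lk k"
  using finite_Lk Lk_ne by (simp add: set_pmf_of_set)

lemma prob_U_prefix:
  assumes "length a = k" "j \<le> k"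
  shows "measure_pmf.prob (U k) {b. take j a = take j b} = (1/2)^j"
proof -
  have "Lk k \<inter> {b. take j a = take j b} = {b \<in> Lk k. take j b = take j a}" by auto
  then have "measure_pmf.prob (U k) {b. take j a = take j b} = 2 ^ (k - j) / 2 ^ k"
    using measure_pmf_of_set[OF Lk_ne finite_Lk] card_prefix[of "take j a" j k] assms card_Lk
    by simp
  also have "\<dots> = (1/2)^j"
  proof -
    have e: "(2::real)^k = 2^(k-j) * 2^j" using assms(2) by (metis le_add_diff_inverse2 power_add)
    have "(2::real)^(k-j) / 2^k = 1 / 2^j" unfolding e by simp
    then show ?thesis by (simp add: power_one_over)
  qed
  finally show ?thesis .
qed

lemma measure_bind_pmf_real:
  assumes "finite (set_pmf M)"
  shows "measure_pmf.prob (bind_pmf M N) X = measure_pmf.expectation M (\<lambda>x. measure_pmf.prob (N x) X)"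
proof -
  have "ennreal (measure_pmf.prob (bind_pmf M N) X) = emeasure (bind_pmf M N) X"
    by (simp add: measure_pmf.emeasure_eq_measure)
  also have "\<dots> = (\<integral>\<^sup>+x. emeasure (N x) X \<partial>M)" by simp
  also have "\<dots> = (\<integral>\<^sup>+x. ennreal (measure_pmf.prob (N x) X) \<partial>M)"
    by (simp add: measure_pmf.emeasure_eq_measure)
  also have "\<dots> = ennreal (measure_pmf.expectation M (\<lambda>x. measure_pmf.prob (N x) X))"
    by (rule nn_integral_eq_integral) (auto simp: integrable_measure_pmf_finite[OF assms])
  finally show ?thesis
    by (subst (asm) ennreal_inj) (auto intro: Bochner_Integration.integral_nonneg)
qed

lemma prob_pair_pmf:
  assumes "finite (set_pmf M)"
  shows "measure_pmf.prob (pair_pmf M N) X = measure_pmf.expectation M (\<lambda>x. measure_pmf.prob N {y. (x, y) \<in> X})"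
proof -
  have "pair_pmf M N = bind_pmf M (\<lambda>x. map_pmf (Pair x) N)"
    unfolding pair_pmf_def map_pmf_def by simp
  then have "measure_pmf.prob (pair_pmf M N) X = measure_pmf.expectation M (\<lambda>x. measure_pmf.prob (map_pmf (Pair x) N) X)"
    using measure_bind_pmf_real[OF assms, of "\<lambda>x. map_pmf (Pair x) N" X] by simp
  also have "\<dots> = measure_pmf.expectation M (\<lambda>x. measure_pmf.prob N {y. (x, y) \<in> X})"
    by (simp add: vimage_def)
  finally show ?thesis .
qed

lemma expectation_const_on_support:
  fixes f :: "'a \<Rightarrow> real"
  assumes "\<And>x. x \<in> set_pmf M \<Longrightarrow> f x = c"
  shows "measure_pmf.expectation M f = c"
proof -
  have "measure_pmf.expectation M f = measure_pmf.expectation M (\<lambda>_. c)"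
    using assms by (intro integral_cong_AE) (auto simp: AE_measure_pmf_iff)
  then show ?thesis using measure_pmf.prob_space[of M] by simp
qed

lemma prob_pair_U_prefix:
  assumes "j \<le> k"
  shows "measure_pmf.prob (pair_pmf (U k) (U k)) {(a, b). take j a = take j b} = (1/2)^j"
proof -
  have "measure_pmf.prob (pair_pmf (U k) (U k)) {(a, b). take j a = take j b}
     = measure_pmf.expectation (U k) (\<lambda>a. measure_pmf.prob (U k) {b. take j a = take j b})"
    using prob_pair_pmf[of "U k" "U k"] set_U finite_Lk by simp
  also have "\<dots> = (1/2)^j"
    by (rule expectation_const_on_support) (use prob_U_prefix assms set_U in \<open>auto simp: Lk_def\<close>)
  finally show ?thesis .
qed

lemma profiles_pair:
  assumes "i < n" "i' < n" "i \<noteq> i'"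
  shows "map_pmf (\<lambda>f. (f i, f i')) (profiles_pmf n k) = pair_pmf (U k) (U k)"
proof -
  let ?A = "{..<n} - {i}"
  have A: "{..<n} = insert i ?A" using assms by auto
  have "profiles_pmf n k = map_pmf (\<lambda>(y,f). f(i:=y)) (pair_pmf (U k) (Pi_pmf ?A [] (\<lambda>_. U k)))"
    unfolding profiles_pmf_U by (subst A, subst Pi_pmf_insert) auto
  then have "map_pmf (\<lambda>f. (f i, f i')) (profiles_pmf n k) =
      map_pmf (\<lambda>(y,f). (y, f i')) (pair_pmf (U k) (Pi_pmf ?A [] (\<lambda>_. U k)))"
    using assms by (simp add: pmf.map_comp o_def case_prod_unfold)
  also have "\<dots> = pair_pmf (U k) (map_pmf (\<lambda>f. f i') (Pi_pmf ?A [] (\<lambda>_. U k)))"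
    by (simp add: pair_map_pmf2 apsnd_def map_prod_def case_prod_unfold)
  also have "map_pmf (\<lambda>f. f i') (Pi_pmf ?A [] (\<lambda>_. U k)) = U k"
    using assms by (subst Pi_pmf_component) auto
  finally show ?thesis .
qed

lemma profiles_component:
  assumes "i < n"
  shows "map_pmf (\<lambda>f. f i) (profiles_pmf n k) = U k"
  using assms unfolding profiles_pmf_U by (subst Pi_pmf_component) auto

lemma set_profiles: "set_pmf (profiles_pmf n k) = PiE_dflt {..<n} [] (\<lambda>_. Lk k)"
  unfolding profiles_pmf_U by (subst set_Pi_pmf) (auto simp: set_U o_def)

lemma finite_rankings: "finite (rankings n)"
proof -
  have "rankings n \<subseteq> {..<n} \<rightarrow>\<^sub>E {..<n}" unfolding rankings_def by auto
  then show ?thesis by (rule finite_subset) (auto intro: finite_PiE)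
qed

lemma rankings_ne: "rankings n \<noteq> {}"
proof -
  have "restrict id {..<n} \<in> rankings n" unfolding rankings_def
    by (auto simp: bij_betw_def inj_on_def)
  then show ?thesis by blast
qed

lemma set_ties: "set_pmf (ties_pmf n) = PiE_dflt {..<n} (\<lambda>_. 0) (\<lambda>_. rankings n)"
  unfolding ties_pmf_def by (subst set_Pi_pmf) (auto simp: set_pmf_of_set[OF rankings_ne finite_rankings] o_def)

lemma finite_profiles: "finite (set_pmf (profiles_pmf n k))"
  unfolding set_profiles by (rule finite_PiE_dflt) (auto simp: finite_Lk)

lemma finite_ties: "finite (set_pmf (ties_pmf n))"
  unfolding set_ties by (rule finite_PiE_dflt) (auto simp: finite_rankings)

lemma set_rpmp: "set_pmf (rpmp_pmf n k) = (\<lambda>(A,B,S,T). \<lparr>mprof = A, wprof = B, mtie = S, wtie = T\<rparr>) `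
    (set_pmf (profiles_pmf n k) \<times> set_pmf (profiles_pmf n k) \<times> set_pmf (ties_pmf n) \<times> set_pmf (ties_pmf n))"
  unfolding rpmp_pmf_def by (auto simp: image_iff)

lemma finite_rpmp: "finite (set_pmf (rpmp_pmf n k))"
  unfolding set_rpmp using finite_profiles finite_ties by auto

lemma wf_rpmp: "I \<in> set_pmf (rpmp_pmf n k) \<Longrightarrow> wfI n k I"
  unfolding set_rpmp wfI_def set_profiles set_ties by (auto simp: PiE_dflt_def Lk_def)

lemma map_rpmp: "map_pmf (\<lambda>I. (mprof I, wprof I)) (rpmp_pmf n k) = pair_pmf (profiles_pmf n k) (profiles_pmf n k)"
  unfolding rpmp_pmf_def pair_pmf_def by (simp add: map_bind_pmf bind_pmf_const)


definition eqp :: "nat \<Rightarrow> bool list \<Rightarrow> bool list \<Rightarrow> real" where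
  "eqp j a b = (if take j a = take j b then 1 else 0)"

definition SMM :: "nat \<Rightarrow> nat \<Rightarrow> (nat \<Rightarrow> bool list) \<Rightarrow> real" where
  "SMM n j f = (\<Sum>i<n. \<Sum>i'<n. eqp j (f i) (f i'))"

definition SMW :: "nat \<Rightarrow> nat \<Rightarrow> (nat \<Rightarrow> bool list) \<Rightarrow> (nat \<Rightarrow> bool list) \<Rightarrow> real" where
  "SMW n j f g = (\<Sum>i<n. \<Sum>i'<n. eqp j (f i) (g i'))"

lemma eqp_nonneg: "0 \<le> eqp j a b" unfolding eqp_def by auto

lemma card_as_sum: "finite A \<Longrightarrow> real (card {x\<in>A. P x}) = (\<Sum>x\<in>A. if P x then 1 else 0)"
  by (simp add: sum.inter_filter[symmetric])

lemma expect_eqp_pair: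
  assumes "j \<le> k"
  shows "measure_pmf.expectation (pair_pmf (U k) (U k)) (\<lambda>(a, b). eqp j a b) = (1/2)^j"
proof -
  have "(\<lambda>(a, b). eqp j a b) = indicator {(a, b). take j a = take j b}"
    by (auto simp: eqp_def fun_eq_iff split: split_indicator)
  then show ?thesis using prob_pair_U_prefix[OF assms] by simp
qed

lemma expect_P_offdiag:
  assumes "j \<le> k" "i < n" "i' < n" "i \<noteq> i'"
  shows "measure_pmf.expectation (profiles_pmf n k) (\<lambda>f. eqp j (f i) (f i')) = (1/2)^j"
proof -
  have "measure_pmf.expectation (profiles_pmf n k) (\<lambda>f. eqp j (f i) (f i')) =
        measure_pmf.expectation (map_pmf (\<lambda>f. (f i, f i')) (profiles_pmf n k)) (\<lambda>(a, b). eqp j a b)"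
    by simp
  also have "\<dots> = (1/2)^j" unfolding profiles_pair[OF assms(2-4)] by (rule expect_eqp_pair[OF assms(1)])
  finally show ?thesis .
qed

lemma expect_P_diag:
  "measure_pmf.expectation (profiles_pmf n k) (\<lambda>f. eqp j (f i) (f i)) = 1"
  by (simp add: eqp_def)

lemma expect_SMM:
  assumes "j \<le> k"
  shows "measure_pmf.expectation (profiles_pmf n k) (SMM n j) = real n + real n * (real n - 1) * (1/2)^j"
proof -
  have int: "integrable (measure_pmf (profiles_pmf n k)) h" for h :: "_ \<Rightarrow> real"
    by (rule integrable_measure_pmf_finite[OF finite_profiles])
  have "measure_pmf.expectation (profiles_pmf n k) (SMM n j) =
      (\<Sum>i<n. \<Sum>i'<n. measure_pmf.expectation (profiles_pmf n k) (\<lambda>f. eqp j (f i) (f i')))"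
    unfolding SMM_def
    by (subst Bochner_Integration.integral_sum[OF int], subst Bochner_Integration.integral_sum[OF int]) simp
  also have "\<dots> = (\<Sum>i<n. 1 + (real n - 1) * (1/2)^j)"
  proof (rule sum.cong[OF refl])
    fix i assume i: "i \<in> {..<n}"
    have "(\<Sum>i'<n. measure_pmf.expectation (profiles_pmf n k) (\<lambda>f. eqp j (f i) (f i')))
       = (\<Sum>i'<n. if i' = i then 1 else (1/2)^j)"
      using expect_P_offdiag[OF assms] expect_P_diag i by (intro sum.cong) auto
    also have "\<dots> = 1 + (real n - 1) * (1/2)^j"
    proof -
      have "(\<Sum>i'<n. if i' = i then 1 else (1/2::real)^j) = (\<Sum>i'<n. (if i' = i then 1 - (1/2)^j else 0) + (1/2)^j)"
        by (intro sum.cong) auto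
      also have "\<dots> = (1 - (1/2)^j) + real n * (1/2)^j"
        using i by (simp add: sum.distrib)
      finally show ?thesis by (simp add: algebra_simps)
    qed
    finally show "(\<Sum>i'<n. measure_pmf.expectation (profiles_pmf n k) (\<lambda>f. eqp j (f i) (f i'))) = 1 + (real n - 1) * (1/2)^j" .
  qed
  also have "\<dots> = real n + real n * (real n - 1) * (1/2)^j" by (simp add: algebra_simps)
  finally show ?thesis .
qed

lemma expect_SMW:
  assumes "j \<le> k"
  shows "measure_pmf.expectation (pair_pmf (profiles_pmf n k) (profiles_pmf n k)) (\<lambda>(f, g). SMW n j f g)
     = real n * real n * (1/2)^j"
proof -
  let ?Q = "pair_pmf (profiles_pmf n k) (profiles_pmf n k)"
  have fin: "finite (set_pmf ?Q)" using finite_profiles by simp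
  have int: "integrable (measure_pmf ?Q) h" for h :: "_ \<Rightarrow> real"
    by (rule integrable_measure_pmf_finite[OF fin])
  have e: "measure_pmf.expectation ?Q (\<lambda>(f, g). eqp j (f i) (g i')) = (1/2)^j" if "i < n" "i' < n" for i i'
  proof -
    have "measure_pmf.expectation ?Q (\<lambda>(f, g). eqp j (f i) (g i')) =
          measure_pmf.expectation (map_pmf (\<lambda>(f, g). (f i, g i')) ?Q) (\<lambda>(a, b). eqp j a b)"
      by (simp add: case_prod_unfold)
    also have "map_pmf (\<lambda>(f, g). (f i, g i')) ?Q = pair_pmf (U k) (U k)"
      using map_pair[of "\<lambda>f. f i" "\<lambda>g. g i'" "profiles_pmf n k" "profiles_pmf n k"]
        profiles_component[OF that(1), of k] profiles_component[OF that(2), of k] by simp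
    finally show ?thesis using expect_eqp_pair[OF assms] by simp
  qed
  have "measure_pmf.expectation ?Q (\<lambda>(f, g). SMW n j f g) =
      measure_pmf.expectation ?Q (\<lambda>x. \<Sum>i<n. \<Sum>i'<n. (\<lambda>(f, g). eqp j (f i) (g i')) x)"
    unfolding SMW_def by (simp add: case_prod_unfold)
  also have "\<dots> = (\<Sum>i<n. \<Sum>i'<n. measure_pmf.expectation ?Q (\<lambda>(f, g). eqp j (f i) (g i')))"
    by (subst Bochner_Integration.integral_sum[OF int], subst Bochner_Integration.integral_sum[OF int]) simp
  also have "\<dots> = (\<Sum>i<n. \<Sum>i'<n. (1/2)^j)" using e by simp
  finally show ?thesis by simp
qed

lemma expect_fst: fixes h :: "_ \<Rightarrow> real" shows "measure_pmf.expectation (pair_pmf A B) (\<lambda>(f, g). h f) = measure_pmf.expectation A h"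
  using expectation_pair_pmf_fst[of A B h] by (simp add: case_prod_unfold)
lemma expect_snd: fixes h :: "_ \<Rightarrow> real" shows "measure_pmf.expectation (pair_pmf A B) (\<lambda>(f, g). h g) = measure_pmf.expectation B h"
  using expectation_pair_pmf_snd[of A B h] by (simp add: case_prod_unfold)

lemma expect_rpmp:
  fixes h :: "_ \<Rightarrow> real"
  shows "measure_pmf.expectation (rpmp_pmf n k) (\<lambda>I. h (mprof I, wprof I)) =
   measure_pmf.expectation (pair_pmf (profiles_pmf n k) (profiles_pmf n k)) h"
  using integral_map_pmf[of "\<lambda>I. (mprof I, wprof I)" "rpmp_pmf n k" h] map_rpmp by simp

lemma prob_le_expect:
  fixes g :: "'a \<Rightarrow> real"
  assumes fin: "finite (set_pmf M)" and ge: "\<And>x. x \<in> set_pmf M \<Longrightarrow> x \<in> A \<Longrightarrow> 1 \<le> g x"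
    and nn: "\<And>x. x \<in> set_pmf M \<Longrightarrow> 0 \<le> g x"
  shows "measure_pmf.prob M A \<le> measure_pmf.expectation M g"
proof -
  have "measure_pmf.prob M A = measure_pmf.expectation M (indicator A)" by simp
  also have "\<dots> \<le> measure_pmf.expectation M g"
    using ge nn by (intro integral_mono_AE) (auto simp: integrable_measure_pmf_finite[OF fin] AE_measure_pmf_iff split: split_indicator)
  finally show ?thesis .
qed

lemma expect_mono_pmf:
  fixes f g :: "'a \<Rightarrow> real"
  assumes fin: "finite (set_pmf M)" and le: "\<And>x. x \<in> set_pmf M \<Longrightarrow> f x \<le> g x"
  shows "measure_pmf.expectation M f \<le> measure_pmf.expectation M g"
  using le by (intro integral_mono_AE) (auto simp: integrable_measure_pmf_finite[OF fin] AE_measure_pmf_iff)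


lemma sum_ge_member:
  fixes f :: "nat \<Rightarrow> real"
  assumes "finite A" "x \<in> A" "\<And>y. y \<in> A \<Longrightarrow> 0 \<le> f y"
  shows "f x \<le> sum f A"
  using member_le_sum[of x A f] assms by auto

lemma eqp_same: "eqp j x x = 1" unfolding eqp_def by simp

lemma offdiag_sum:
  fixes e :: "nat \<Rightarrow> real" and m n :: nat
  assumes "m < n"
  shows "(\<Sum>i'<n. if i' \<noteq> m then e i' else 0) = (\<Sum>i'<n. e i') - (e m :: real)"
proof -
  have "(\<Sum>i'<n. if i' \<noteq> m then e i' else 0) = (\<Sum>i'<n. e i' - (if i' = m then e i' else 0))"
    by (intro sum.cong) auto
  also have "\<dots> = (\<Sum>i'<n. e i') - (\<Sum>i'<n. if i' = m then e i' else 0)"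
    by (simp add: sum_subtractf)
  also have "(\<Sum>i'<n. if i' = m then e i' else 0) = e m"
  proof -
    have "(\<Sum>i'<n. if i' = m then e i' else 0) = (if m = m then e m else 0) + (\<Sum>i'\<in>{..<n}-{m}. if i' = m then e i' else 0)"
      using assms by (subst sum.remove[of _ m]) auto
    also have "(\<Sum>i'\<in>{..<n}-{m}. if i' = m then e i' else 0) = 0" by (intro sum.neutral) auto
    finally show ?thesis by simp
  qed
  finally show ?thesis .
qed

lemma twin_card:
  assumes "\<And>i. i < n \<Longrightarrow> P i \<Longrightarrow> \<exists>i'<n. i' \<noteq> i \<and> f i' = f i"
  shows "real (card {i\<in>{..<n}. P i}) \<le> SMM n j f - real n"
proof -
  have "real (card {i\<in>{..<n}. P i}) = (\<Sum>i<n. if P i then 1 else 0)" by (rule card_as_sum) simp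
  also have "\<dots> \<le> (\<Sum>i<n. \<Sum>i'<n. if i' \<noteq> i then eqp j (f i) (f i') else 0)"
  proof (rule sum_mono)
    fix i assume i: "i \<in> {..<n}"
    show "(if P i then 1 else 0) \<le> (\<Sum>i'<n. if i' \<noteq> i then eqp j (f i) (f i') else 0)"
    proof (cases "P i")
      case True
      then obtain i' where i': "i' < n" "i' \<noteq> i" "f i' = f i" using assms i by blast
      have "(if i' \<noteq> i then eqp j (f i) (f i') else 0) \<le> (\<Sum>i'<n. if i' \<noteq> i then eqp j (f i) (f i') else 0)"
        by (rule sum_ge_member) (use i' eqp_nonneg in auto)
      then show ?thesis using True i' by (simp add: eqp_same)
    next
      case False
      then show ?thesis by (simp add: sum_nonneg eqp_nonneg)
    qed
  qed
  also have "\<dots> = (\<Sum>i<n. (\<Sum>i'<n. eqp j (f i) (f i')) - 1)"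
    by (intro sum.cong refl) (simp add: offdiag_sum eqp_same)
  also have "\<dots> = SMM n j f - real n" unfolding SMM_def by (simp add: sum_subtractf)
  finally show ?thesis .
qed

lemma close_card:
  assumes s: "stable n k I \<mu>"
  shows "real (card {m\<in>{..<n}. take j (mprof I m) = take j (wprof I (\<mu> m))}) \<le> SMW n j (mprof I) (wprof I)"
proof -
  have "real (card {m\<in>{..<n}. take j (mprof I m) = take j (wprof I (\<mu> m))}) = (\<Sum>m<n. eqp j (mprof I m) (wprof I (\<mu> m)))"
    by (subst card_as_sum) (auto simp: eqp_def)
  also have "\<dots> \<le> SMW n j (mprof I) (wprof I)"
    unfolding SMW_def
  proof (rule sum_mono)
    fix m assume m: "m \<in> {..<n}"
    show "eqp j (mprof I m) (wprof I (\<mu> m)) \<le> (\<Sum>i'<n. eqp j (mprof I m) (wprof I i'))"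
      by (rule sum_ge_member[where f="\<lambda>i'. eqp j (mprof I m) (wprof I i')"]) (use stable_facts(3)[OF s] m eqp_nonneg in auto)
  qed
  finally show ?thesis .
qed

definition DB :: "nat \<Rightarrow> nat \<Rightarrow> (nat \<Rightarrow> bool list) \<Rightarrow> (nat \<Rightarrow> bool list) \<Rightarrow> bool list \<Rightarrow> real" where
  "DB n j a b B = real (card {m\<in>{..<n}. take j (a m) = B}) - real (card {w\<in>{..<n}. take j (b w) = B})"

lemma far_card:
  assumes wf: "wfI n k I" and s: "stable n k I \<mu>" and jk: "j \<le> k"
  shows "real (card {m\<in>{..<n}. take j (mprof I m) \<noteq> take j (wprof I (\<mu> m))}) \<le> (\<Sum>B\<in>Lk j. \<bar>DB n j (mprof I) (wprof I) B\<bar>)"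
proof -
  let ?a = "mprof I" and ?b = "wprof I" and ?A = "{..<n}"
  note F = stable_facts[OF s]
  have len: "length (?a x) = k" "length (?b x) = k" if "x < n" for x
    using wf that unfolding wfI_def by auto
  define Out where "Out B = {m\<in>?A. take j (?a m) = B \<and> take j (?b (\<mu> m)) \<noteq> B}" for B
  have U: "{m\<in>?A. take j (?a m) \<noteq> take j (?b (\<mu> m))} = (\<Union>B\<in>Lk j. Out B)"
  proof (intro equalityI subsetI)
    fix m assume m: "m \<in> {m\<in>?A. take j (?a m) \<noteq> take j (?b (\<mu> m))}"
    then have mn: "m < n" by simp
    have "length (take j (?a m)) = j" using len(1)[OF mn] jk by simp
    then have "take j (?a m) \<in> Lk j" by (simp add: Lk_def)
    moreover have neq: "take j (?b (\<mu> m)) \<noteq> take j (?a m)" using m by (simp add: not_sym)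
    moreover have "m \<in> Out (take j (?a m))" unfolding Out_def using mn neq by simp
    ultimately show "m \<in> (\<Union>B\<in>Lk j. Out B)" by blast
  next
    fix m assume "m \<in> (\<Union>B\<in>Lk j. Out B)"
    then obtain B where "m \<in> Out B" by blast
    then have "m < n" "take j (?a m) = B" "take j (?b (\<mu> m)) \<noteq> B" unfolding Out_def by auto
    then show "m \<in> {m\<in>?A. take j (?a m) \<noteq> take j (?b (\<mu> m))}" by simp
  qed
  have "card (\<Union>B\<in>Lk j. Out B) = (\<Sum>B\<in>Lk j. card (Out B))"
  proof (rule card_UN_disjoint)
    show "finite (Lk j)" by (rule finite_Lk)
    show "\<forall>i\<in>Lk j. finite (Out i)" unfolding Out_def by simp
    show "\<forall>i\<in>Lk j. \<forall>j'\<in>Lk j. i \<noteq> j' \<longrightarrow> Out i \<inter> Out j' = {}" unfolding Out_def by blast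
  qed
  then have "real (card {m\<in>?A. take j (?a m) \<noteq> take j (?b (\<mu> m))}) = (\<Sum>B\<in>Lk j. real (card (Out B)))"
    unfolding U by simp
  also have "\<dots> \<le> (\<Sum>B\<in>Lk j. \<bar>DB n j ?a ?b B\<bar>)"
  proof (rule sum_mono)
    fix B assume B: "B \<in> Lk j"
    define Mb where "Mb = {m\<in>?A. take j (?a m) = B}"
    define Wb where "Wb = {w\<in>?A. take j (?b w) = B}"
    show "real (card (Out B)) \<le> \<bar>DB n j ?a ?b B\<bar>"
    proof (cases "Out B = {}")
      case True then show ?thesis by simp
    next
      case False
      then obtain m0 where m0: "m0 < n" "take j (?a m0) = B" "take j (?b (\<mu> m0)) \<noteq> B"
        unfolding Out_def by auto
      have m0n: "\<mu> m0 < n" using F(3) m0 by blast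
      have inside: "take j (?a (inv_into ?A \<mu> w)) = B" if w: "w \<in> Wb" for w
      proof (rule ccontr)
        assume c: "take j (?a (inv_into ?A \<mu> w)) \<noteq> B"
        let ?m' = "inv_into ?A \<mu> w"
        have wn: "w < n" "take j (?b w) = B" using w unfolding Wb_def by auto
        have m'n: "?m' < n" using F(4) wn by blast
        have d1: "dw k (?a m0) (?b w) < (1/2)^j"
          using dw_prefix[OF len(1)[OF m0(1)] len(2)[OF wn(1)] jk] m0 wn by simp
        have d2: "\<not> dw k (?a m0) (?b (\<mu> m0)) < (1/2)^j"
          using dw_prefix[OF len(1)[OF m0(1)] len(2)[OF m0n] jk] m0 by simp
        have d3: "\<not> dw k (?b w) (?a ?m') < (1/2)^j"
          using dw_prefix[OF len(2)[OF wn(1)] len(1)[OF m'n] jk] c wn by simp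
        have "mprefers k I m0 w (\<mu> m0)" unfolding mprefers_def using d1 d2 by simp
        moreover have "wprefers k I w m0 ?m'" unfolding wprefers_def using d1 d3 by (simp add: dw_sym)
        ultimately show False using F(7)[OF m0(1) wn(1)] by blast
      qed
      have sub: "inv_into ?A \<mu> ` Wb \<subseteq> Mb - Out B"
      proof
        fix m assume "m \<in> inv_into ?A \<mu> ` Wb"
        then obtain w where w: "w \<in> Wb" "m = inv_into ?A \<mu> w" by blast
        have wn: "w < n" "take j (?b w) = B" using w unfolding Wb_def by auto
        have "m < n" using F(4) wn w by blast
        moreover have "take j (?a m) = B" using inside w by blast
        moreover have "\<mu> m = w" using F(5) wn w by blast
        ultimately show "m \<in> Mb - Out B" unfolding Mb_def Out_def using wn by auto
      qed
      have inj: "inj_on (inv_into ?A \<mu>) Wb"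
        by (rule inj_on_inv_into) (use F(2) Wb_def in \<open>auto simp: bij_betw_def\<close>)
      have OM: "Out B \<subseteq> Mb" unfolding Out_def Mb_def by auto
      have "card Wb \<le> card (Mb - Out B)"
        using card_mono[OF _ sub] card_image[OF inj] by (simp add: Mb_def)
      also have "\<dots> = card Mb - card (Out B)" using OM by (simp add: card_Diff_subset Mb_def finite_subset)
      finally have "card Wb + card (Out B) \<le> card Mb" using card_mono[OF _ OM] by (simp add: Mb_def)
      then have "real (card (Out B)) \<le> real (card Mb) - real (card Wb)" by linarith
      then show ?thesis unfolding DB_def Mb_def Wb_def by simp
    qed
  qed
  finally show ?thesis .
qed

lemma key_sum:
  assumes "j \<le> length x"
  shows "(\<Sum>B\<in>Lk j. (if take j x = B then 1 else 0) * (if take j y = B then 1 else (0::real))) = eqp j x y"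
proof -
  have "(\<Sum>B\<in>Lk j. (if take j x = B then 1 else 0) * (if take j y = B then 1 else (0::real)))
      = (\<Sum>B\<in>Lk j. if B = take j x then (if take j y = B then 1 else 0) else 0)"
    by (intro sum.cong) auto
  also have "\<dots> = (if take j y = take j x then 1 else 0)"
    using assms finite_Lk[of j] by (subst sum.delta) (auto simp: Lk_def)
  finally show ?thesis unfolding eqp_def by auto
qed

lemma cross_sum:
  assumes "\<And>i. i < n \<Longrightarrow> j \<le> length (u i)"
  shows "(\<Sum>B\<in>Lk j. (\<Sum>i<n. if take j (u i) = B then 1 else 0) * (\<Sum>i'<n. if take j (v i') = B then 1 else (0::real)))
     = (\<Sum>i<n. \<Sum>i'<n. eqp j (u i) (v i'))"
proof -
  have "(\<Sum>B\<in>Lk j. (\<Sum>i<n. if take j (u i) = B then 1 else 0) * (\<Sum>i'<n. if take j (v i') = B then 1 else (0::real)))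
     = (\<Sum>B\<in>Lk j. \<Sum>i<n. \<Sum>i'<n. (if take j (u i) = B then 1 else 0) * (if take j (v i') = B then 1 else (0::real)))"
    by (simp add: sum_product)
  also have "\<dots> = (\<Sum>i<n. \<Sum>B\<in>Lk j. \<Sum>i'<n. (if take j (u i) = B then 1 else 0) * (if take j (v i') = B then 1 else (0::real)))"
    by (rule sum.swap)
  also have "\<dots> = (\<Sum>i<n. \<Sum>i'<n. \<Sum>B\<in>Lk j. (if take j (u i) = B then 1 else 0) * (if take j (v i') = B then 1 else (0::real)))"
    by (intro sum.cong refl, rule sum.swap)
  also have "\<dots> = (\<Sum>i<n. \<Sum>i'<n. eqp j (u i) (v i'))"
    using assms by (intro sum.cong refl) (simp add: key_sum)
  finally show ?thesis .
qed

lemma DB_sq_sum: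
  assumes "\<And>i. i < n \<Longrightarrow> j \<le> length (a i)" "\<And>i. i < n \<Longrightarrow> j \<le> length (b i)"
  shows "(\<Sum>B\<in>Lk j. (DB n j a b B)^2) = SMM n j a + SMM n j b - 2 * SMW n j a b"
proof -
  define SA where "SA B = (\<Sum>i<n. if take j (a i) = B then 1 else (0::real))" for B
  define SB where "SB B = (\<Sum>i<n. if take j (b i) = B then 1 else (0::real))" for B
  have dbe: "DB n j a b B = SA B - SB B" for B
    unfolding DB_def SA_def SB_def
    by (subst card_as_sum, simp, subst card_as_sum, simp, rule refl)
  have "(\<Sum>B\<in>Lk j. (DB n j a b B)^2) = (\<Sum>B\<in>Lk j. SA B * SA B + SB B * SB B - 2 * (SA B * SB B))"
    unfolding dbe power2_eq_square by (intro sum.cong refl) (simp add: algebra_simps)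
  also have "\<dots> = (\<Sum>B\<in>Lk j. SA B * SA B) + (\<Sum>B\<in>Lk j. SB B * SB B) - 2 * (\<Sum>B\<in>Lk j. SA B * SB B)"
    by (simp add: sum.distrib sum_subtractf sum_distrib_left)
  also have "(\<Sum>B\<in>Lk j. SA B * SA B) = SMM n j a" unfolding SA_def SMM_def by (rule cross_sum) (use assms in auto)
  also have "(\<Sum>B\<in>Lk j. SB B * SB B) = SMM n j b" unfolding SB_def SMM_def by (rule cross_sum) (use assms in auto)
  also have "(\<Sum>B\<in>Lk j. SA B * SB B) = SMW n j a b" unfolding SA_def SB_def SMW_def by (rule cross_sum) (use assms in auto)
  finally show ?thesis .
qed

lemma CS_abs:
  fixes D :: "bool list \<Rightarrow> real"
  shows "(\<Sum>B\<in>Lk j. \<bar>D B\<bar>)^2 \<le> 2^j * (\<Sum>B\<in>Lk j. (D B)^2)"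
proof -
  have "(\<Sum>B\<in>Lk j. \<bar>D B\<bar> * 1)^2 \<le> (\<Sum>B\<in>Lk j. \<bar>D B\<bar>^2) * (\<Sum>B\<in>Lk j. 1^2)"
    by (rule Cauchy_Schwarz_ineq_sum)
  then show ?thesis by (simp add: card_Lk mult.commute)
qed


lemma pow2_log: "x > 0 \<Longrightarrow> 2 powr (c * log 2 x) = x powr c"
proof -
  assume x: "x > 0"
  have "2 powr (c * log 2 x) = (2 powr (log 2 x)) powr c" by (simp add: powr_powr mult.commute)
  then show ?thesis using x by simp
qed

lemma log_bad:
  fixes X x \<delta> :: real
  assumes X: "X \<ge> 0" and x: "x > 1" and d: "\<delta> > 0"
    and bad: "\<bar>log 2 X / log 2 x + 1\<bar> > \<delta>"
  shows "X < x powr (-1 - \<delta>) \<or> X > x powr (-1 + \<delta>)"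
proof (cases "X = 0")
  case True
  then show ?thesis using x by simp
next
  case False
  then have Xp: "X > 0" using X by simp
  have L: "log 2 x > 0" using x by simp
  consider "log 2 X / log 2 x + 1 > \<delta>" | "log 2 X / log 2 x + 1 < - \<delta>" using bad by linarith
  then show ?thesis
  proof cases
    case 1
    then have "log 2 X > (-1 + \<delta>) * log 2 x" using L by (simp add: field_simps)
    then have "2 powr ((-1 + \<delta>) * log 2 x) < X" using Xp by (simp add: less_log_iff)
    then show ?thesis using pow2_log[of x] x by simp
  next
    case 2
    then have "log 2 X < (-1 - \<delta>) * log 2 x" using L by (simp add: field_simps)
    then have "X < 2 powr ((-1 - \<delta>) * log 2 x)" using Xp by (simp add: log_less_iff)
    then show ?thesis using pow2_log[of x] x by simp
  qed
qed

lemma half_pow_lt: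
  assumes "x > 0" "real k > c * log 2 x"
  shows "(1/2::real)^k < x powr (-c)"
proof -
  have "x powr c = 2 powr (c * log 2 x)" using pow2_log assms by simp
  also have "\<dots> < 2 powr (real k)" using assms by simp
  also have "\<dots> = 2^k" by (simp add: powr_realpow)
  finally have "x powr c < 2^k" .
  then have "1 / 2^k < 1 / x powr c" using assms by (intro divide_strict_left_mono) auto
  then show ?thesis using assms by (simp add: powr_minus_divide power_one_over)
qed

lemma floor_pow:
  assumes "t \<ge> 0"
  shows "(2::real)^(nat \<lfloor>t\<rfloor>) \<le> 2 powr t" "(2::real)^(nat \<lfloor>t\<rfloor>) \<ge> 2 powr t / 2"
proof -
  have e: "(2::real)^(nat \<lfloor>t\<rfloor>) = 2 powr (real (nat \<lfloor>t\<rfloor>))" by (simp add: powr_realpow)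
  have r: "real (nat \<lfloor>t\<rfloor>) = of_int \<lfloor>t\<rfloor>" using assms by simp
  show "(2::real)^(nat \<lfloor>t\<rfloor>) \<le> 2 powr t" unfolding e r by simp
  have "2 powr t / 2 = 2 powr (t - 1)" by (simp add: powr_diff)
  also have "\<dots> \<le> 2 powr (of_int \<lfloor>t\<rfloor>)" by simp
  finally show "(2::real)^(nat \<lfloor>t\<rfloor>) \<ge> 2 powr t / 2" unfolding e r .
qed

lemma ceil_pow:
  assumes "t \<ge> 0"
  shows "(2::real)^(nat \<lceil>t\<rceil>) \<ge> 2 powr t" "(2::real)^(nat \<lceil>t\<rceil>) \<le> 2 * 2 powr t"
proof -
  have e: "(2::real)^(nat \<lceil>t\<rceil>) = 2 powr (real (nat \<lceil>t\<rceil>))" by (simp add: powr_realpow)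
  have r: "real (nat \<lceil>t\<rceil>) = of_int \<lceil>t\<rceil>" using assms by simp
  show "(2::real)^(nat \<lceil>t\<rceil>) \<ge> 2 powr t" unfolding e r by simp
  have "2 powr (of_int \<lceil>t\<rceil>) \<le> 2 powr (t + 1)" by simp
  also have "\<dots> = 2 * 2 powr t" by (simp add: powr_add)
  finally show "(2::real)^(nat \<lceil>t\<rceil>) \<le> 2 * 2 powr t" unfolding e r .
qed


lemma pow2_log': "x > 0 \<Longrightarrow> 2 powr (c * log 2 x) = x powr c"
proof -
  assume x: "x > 0"
  have "2 powr (c * log 2 x) = (2 powr (log 2 x)) powr c" by (simp add: powr_powr mult.commute)
  then show ?thesis using x by simp
qed

lemma x_powr_combine: "(x::real) > 0 \<Longrightarrow> x * x powr (-(1+e)) = x powr (-e)"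
proof -
  assume x: "x > 0"
  have "x * x powr (-(1+e)) = x powr 1 * x powr (-(1+e))" using x by simp
  also have "\<dots> = x powr (1 + -(1+e))" by (simp only: powr_add)
  also have "1 + -(1+e) = -e" by simp
  finally show ?thesis .
qed

lemma x2_powr_combine: "(x::real) > 0 \<Longrightarrow> x * x * x powr (-(2+e)) = x powr (-e)"
proof -
  assume x: "x > 0"
  have "x * x * x powr (-(2+e)) = x powr 1 * x powr 1 * x powr (-(2+e))" using x by simp
  also have "\<dots> = x powr (1 + 1 + -(2+e))" by (simp only: powr_add)
  also have "1 + 1 + -(2+e) = -e" by simp
  finally show ?thesis .
qed

lemma asym1:
  fixes x d :: real
  assumes x: "x \<ge> 2" and d: "d > 0" and jl: "(2::real)^j \<ge> 2 powr ((1+d) * log 2 x) / 2"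
  shows "x * (1/2)^j \<le> 2 * x powr (-d)"
proof -
  have xp: "x > 0" using x by simp
  have "2 powr ((1+d) * log 2 x) = x powr (1+d)" using pow2_log'[OF xp] .
  then have jl': "(2::real)^j \<ge> x powr (1+d) / 2" using jl by simp
  have pp: "x powr (1+d) > 0" using xp by simp
  have "x * (1/2)^j = x / 2^j" by (simp add: power_one_over)
  also have "\<dots> \<le> x / (x powr (1+d) / 2)"
    using jl' pp xp by (intro divide_left_mono) auto
  also have "\<dots> = 2 * (x * x powr (-(1+d)))"
  proof -
    have e1: "x powr (-(1+d)) = 1 / x powr (1+d)" by (rule powr_minus_divide)
    show ?thesis unfolding e1 using pp by simp
  qed
  also have "\<dots> = 2 * x powr (-d)" using x_powr_combine[OF xp] by simp
  finally show ?thesis .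
qed

lemma asym2:
  fixes x d :: real
  assumes x: "x \<ge> 2" and ju: "(2::real)^j \<le> 2 * 2 powr ((1-d) * log 2 x)"
  shows "2 * 2^j / (x * x powr (-d/2)) \<le> 4 * x powr (-d/2)"
proof -
  have xp: "x > 0" using x by simp
  have "2 powr ((1-d) * log 2 x) = x powr (1-d)" using pow2_log'[OF xp] .
  then have ju': "(2::real)^j \<le> 2 * x powr (1-d)" using ju by simp
  have den: "x * x powr (-d/2) > 0" using xp by simp
  have "2 * 2^j / (x * x powr (-d/2)) \<le> 2 * (2 * x powr (1-d)) / (x * x powr (-d/2))"
    using ju' den by (intro divide_right_mono) auto
  also have "2 * (2 * x powr (1-d)) / (x * x powr (-d/2)) = 4 * (x powr (1-d) / (x powr 1 * x powr (-d/2)))"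
    using xp by (simp del: powr_minus_divide)
  also have "x powr (1-d) / (x powr 1 * x powr (-d/2)) = x powr ((1-d) - (1 + -d/2))"
    by (simp only: powr_add[symmetric] powr_diff[symmetric])
  also have "(1-d) - (1 + -d/2) = -d/2" by simp
  finally show ?thesis by simp
qed

lemma lim_powr0: "e > 0 \<Longrightarrow> (\<lambda>n. real n powr (-e)) \<longlonglongrightarrow> 0"
  by (rule tendsto_neg_powr) (auto simp: filterlim_real_sequentially)


lemma E_lin4:
  fixes u1 u2 u3 u4 :: "'a \<Rightarrow> real"
  assumes fin: "finite (set_pmf M)"
  shows "measure_pmf.expectation M (\<lambda>x. c1 * u1 x + c2 * u2 x + c3 * u3 x + c4 * u4 x + d) =
    c1 * measure_pmf.expectation M u1 + c2 * measure_pmf.expectation M u2 +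
    c3 * measure_pmf.expectation M u3 + c4 * measure_pmf.expectation M u4 + d"
proof -
  have int: "integrable (measure_pmf M) h" for h :: "'a \<Rightarrow> real"
    by (rule integrable_measure_pmf_finite[OF fin])
  show ?thesis
    by (simp add: Bochner_Integration.integral_add[OF int int] int measure_pmf.prob_space)
qed

lemma frac_multi_bound:
  assumes wf: "wfI n k I"
  shows "frac_multi n k I \<le> (SMM n k (mprof I) - real n + (SMM n k (wprof I) - real n)) / real (2 * n)"
proof -
  have a: "real (card {m\<in>{..<n}. 2 \<le> card (man_stable_partners n k I m)}) \<le> SMM n k (mprof I) - real n"
    by (rule twin_card) (use man_multi_twin[OF wf] in blast)
  have b: "real (card {w\<in>{..<n}. 2 \<le> card (woman_stable_partners n k I w)}) \<le> SMM n k (wprof I) - real n"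
    by (rule twin_card) (use woman_multi_twin[OF wf] in blast)
  show ?thesis unfolding frac_multi_def using a b
    by (intro divide_right_mono) auto
qed

lemma SMM_ge: "0 \<le> SMM n j f - real n"
  using twin_card[of n "\<lambda>_. False" f j] by simp

lemma frac_multi_nonneg: "0 \<le> frac_multi n k I"
  unfolding frac_multi_def by simp

lemma E_twins:
  assumes "n > 0"
  shows "measure_pmf.expectation (rpmp_pmf n k) (\<lambda>I. SMM n k (mprof I) - real n + (SMM n k (wprof I) - real n))
    = 2 * real n * (real n - 1) * (1/2)^k"
proof -
  let ?Q = "pair_pmf (profiles_pmf n k) (profiles_pmf n k)"
  have fin: "finite (set_pmf ?Q)" using finite_profiles by simp
  have "measure_pmf.expectation (rpmp_pmf n k) (\<lambda>I. SMM n k (mprof I) - real n + (SMM n k (wprof I) - real n))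
      = measure_pmf.expectation ?Q (\<lambda>x. 1 * (\<lambda>(f,g). SMM n k f) x + 1 * (\<lambda>(f,g). SMM n k g) x + 0 * (\<lambda>_. 0) x + 0 * (\<lambda>_. 0) x + (- 2 * real n))"
    using expect_rpmp[where h="\<lambda>x. 1 * (\<lambda>(f,g). SMM n k f) x + 1 * (\<lambda>(f,g). SMM n k g) x + 0 * (\<lambda>_. 0) x + 0 * (\<lambda>_. 0) x + (- 2 * real n)" and n=n and k=k]
    by (simp add: case_prod_unfold algebra_simps)
  also have "\<dots> = measure_pmf.expectation ?Q (\<lambda>(f,g). SMM n k f) + measure_pmf.expectation ?Q (\<lambda>(f,g). SMM n k g) - 2 * real n"
    by (subst E_lin4[OF fin]) simp
  also have "\<dots> = 2 * real n * (real n - 1) * (1/2)^k"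
    using expect_fst[where h="SMM n k" and A="profiles_pmf n k" and B="profiles_pmf n k"]
      expect_snd[where h="SMM n k" and A="profiles_pmf n k" and B="profiles_pmf n k"] expect_SMM[of k k n] by (simp add: algebra_simps)
  finally show ?thesis .
qed

lemma part_ia_bound:
  assumes n: "n > 0" and d: "\<delta> > 0"
  shows "measure_pmf.prob (rpmp_pmf n k) {I. frac_multi n k I > \<delta>} \<le> real n * (1/2)^k / \<delta>"
proof -
  define g :: "rinstance \<Rightarrow> real" where "g I = (SMM n k (mprof I) - real n + (SMM n k (wprof I) - real n)) / (real (2 * n) * \<delta>)" for I
  have fb: "frac_multi n k I / \<delta> \<le> g I" if "I \<in> set_pmf (rpmp_pmf n k)" for I
    using frac_multi_bound[OF wf_rpmp[OF that]] d n unfolding g_def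
    by (simp add: field_simps divide_right_mono)
  have "measure_pmf.prob (rpmp_pmf n k) {I. frac_multi n k I > \<delta>} \<le> measure_pmf.expectation (rpmp_pmf n k) g"
  proof (rule prob_le_expect[OF finite_rpmp])
    fix I assume I: "I \<in> set_pmf (rpmp_pmf n k)"
    show "0 \<le> g I" using fb[OF I] frac_multi_nonneg[of n k I] d by (meson divide_nonneg_pos order_trans)
    assume "I \<in> {I. frac_multi n k I > \<delta>}"
    then have "1 < frac_multi n k I / \<delta>" using d by simp
    then show "1 \<le> g I" using fb[OF I] by simp
  qed
  also have "measure_pmf.expectation (rpmp_pmf n k) g =
     measure_pmf.expectation (rpmp_pmf n k) (\<lambda>I. SMM n k (mprof I) - real n + (SMM n k (wprof I) - real n)) / (real (2 * n) * \<delta>)"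
    unfolding g_def by simp
  also have "\<dots> = 2 * real n * (real n - 1) * (1/2)^k / (real (2 * n) * \<delta>)"
    using E_twins[OF n] by simp
  also have "\<dots> \<le> real n * (1/2)^k / \<delta>"
    using n d by (simp add: field_simps)
  finally show ?thesis .
qed

lemma part_ii_bound:
  assumes n: "n > 0"
  shows "measure_pmf.prob (rpmp_pmf n k) {I. unique_without_ties n k I} \<ge> 1 - 2 * real n * real n * (1/2)^k"
proof -
  define g :: "rinstance \<Rightarrow> real" where "g I = SMM n k (mprof I) - real n + (SMM n k (wprof I) - real n)" for I
  have "measure_pmf.prob (rpmp_pmf n k) (UNIV - {I. unique_without_ties n k I}) \<le> measure_pmf.expectation (rpmp_pmf n k) g"
  proof (rule prob_le_expect[OF finite_rpmp])
    fix I assume I: "I \<in> set_pmf (rpmp_pmf n k)"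
    show "0 \<le> g I" unfolding g_def using SMM_ge[of n k "mprof I"] SMM_ge[of n k "wprof I"] by simp
    assume "I \<in> UNIV - {I. unique_without_ties n k I}"
    then have nu: "\<not> unique_without_ties n k I" by simp
    have "(\<exists>i<n. \<exists>j<n. i \<noteq> j \<and> mprof I i = mprof I j) \<or> (\<exists>i<n. \<exists>j<n. i \<noteq> j \<and> wprof I i = wprof I j)"
      using distinct_unique[OF wf_rpmp[OF I]] nu by blast
    then show "1 \<le> g I"
    proof
      assume "\<exists>i<n. \<exists>j<n. i \<noteq> j \<and> mprof I i = mprof I j"
      then obtain i0 j0 where ij: "i0 < n" "j0 < n" "i0 \<noteq> j0" "mprof I i0 = mprof I j0" by blast
      have "real (card {i\<in>{..<n}. i = i0}) \<le> SMM n k (mprof I) - real n"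
        by (rule twin_card) (use ij in auto)
      moreover have "{i\<in>{..<n}. i = i0} = {i0}" using ij by auto
      ultimately show "1 \<le> g I" unfolding g_def using SMM_ge[of n k "wprof I"] by simp
    next
      assume "\<exists>i<n. \<exists>j<n. i \<noteq> j \<and> wprof I i = wprof I j"
      then obtain i0 j0 where ij: "i0 < n" "j0 < n" "i0 \<noteq> j0" "wprof I i0 = wprof I j0" by blast
      have "real (card {i\<in>{..<n}. i = i0}) \<le> SMM n k (wprof I) - real n"
        by (rule twin_card) (use ij in auto)
      moreover have "{i\<in>{..<n}. i = i0} = {i0}" using ij by auto
      ultimately show "1 \<le> g I" unfolding g_def using SMM_ge[of n k "mprof I"] by simp
    qed
  qed
  also have "measure_pmf.expectation (rpmp_pmf n k) g = 2 * real n * (real n - 1) * (1/2)^k"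
    unfolding g_def by (rule E_twins[OF n])
  finally have "measure_pmf.prob (rpmp_pmf n k) (UNIV - {I. unique_without_ties n k I}) \<le> 2 * real n * (real n - 1) * (1/2)^k" .
  moreover have "measure_pmf.prob (rpmp_pmf n k) (UNIV - {I. unique_without_ties n k I}) = 1 - measure_pmf.prob (rpmp_pmf n k) {I. unique_without_ties n k I}"
    using measure_pmf.prob_compl[of "{I. unique_without_ties n k I}" "rpmp_pmf n k"] by simp
  moreover have "2 * real n * (real n - 1) * (1/2)^k \<le> 2 * real n * real n * (1/2)^k"
    by (intro mult_right_mono mult_left_mono) auto
  ultimately show ?thesis by linarith
qed


lemma t_le: "t \<ge> 0 \<Longrightarrow> (\<eta>::real) > 0 \<Longrightarrow> t \<le> \<eta> + t^2 / \<eta>"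
proof -
  assume t: "t \<ge> 0" and e: "\<eta> > 0"
  have "0 \<le> (t - \<eta>)^2" by simp
  then have A: "2 * (t * \<eta>) \<le> t^2 + \<eta>^2" by (simp add: power2_eq_square algebra_simps)
  have B: "0 \<le> t * \<eta>" using t e by simp
  have "t * \<eta> \<le> t^2 + \<eta>^2" using A B by linarith
  then have "t \<le> (t^2 + \<eta>^2) / \<eta>" using e by (simp add: pos_le_divide_eq)
  also have "\<dots> = \<eta> + t^2 / \<eta>" using e by (simp add: power2_eq_square add_divide_distrib)
  finally show ?thesis .
qed

lemma bad_cond:
  fixes \<delta> :: real
  assumes n: "n \<ge> 2" and d: "\<delta> > 0" and j1: "j1 \<le> k" and j2: "j2 \<le> k"
    and h1: "real n powr (-1-\<delta>) \<le> (1/2)^j1" and h2: "(1/2)^j2 \<le> real n powr (-1+\<delta>)"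
    and x: "length x = k" and y: "length y = k"
    and bad: "\<bar>log 2 (dw k x y) / log 2 (real n) + 1\<bar> > \<delta>"
  shows "take j1 x = take j1 y \<or> take j2 x \<noteq> take j2 y"
proof -
  have "dw k x y < real n powr (-1 - \<delta>) \<or> dw k x y > real n powr (-1 + \<delta>)"
    by (rule log_bad[OF dw_nonneg _ d bad]) (use n in simp)
  then show ?thesis
  proof
    assume "dw k x y < real n powr (-1 - \<delta>)"
    then have "dw k x y < (1/2)^j1" using h1 by simp
    then show ?thesis using dw_prefix[OF x y j1] by simp
  next
    assume "dw k x y > real n powr (-1 + \<delta>)"
    then have "\<not> dw k x y < (1/2)^j2" using h2 by simp
    then show ?thesis using dw_prefix[OF x y j2] by simp
  qed
qed

lemma card_participants: "card (Inl ` {..<n} \<union> Inr ` {..<n} :: (nat + nat) set) = 2 * n"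
proof -
  have "card (Inl ` {..<n} \<union> Inr ` {..<n} :: (nat + nat) set) = card (Inl ` {..<n} :: (nat + nat) set) + card (Inr ` {..<n} :: (nat + nat) set)"
    by (rule card_Un_disjoint) auto
  also have "card (Inl ` {..<n} :: (nat + nat) set) = n" by (simp add: card_image)
  also have "card (Inr ` {..<n} :: (nat + nat) set) = n" by (simp add: card_image)
  finally show ?thesis by simp
qed

lemma per_I:
  fixes \<delta> \<eta> :: real
  assumes wf: "wfI n k I" and n: "n \<ge> 2" and d: "\<delta> > 0" and eta: "\<eta> > 0" and j1: "j1 \<le> k" and j2: "j2 \<le> k"
    and h1: "real n powr (-1-\<delta>) \<le> (1/2)^j1" and h2: "(1/2)^j2 \<le> real n powr (-1+\<delta>)"
  shows "measure_pmf.prob (participant_pmf n) {x. \<bar>log 2 (match_dist n k I x) / log 2 (real n) + 1\<bar> > \<delta>}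
    \<le> SMW n j1 (mprof I) (wprof I) / real n + \<eta> +
       2^j2 * (SMM n j2 (mprof I) + SMM n j2 (wprof I) - 2 * SMW n j2 (mprof I) (wprof I)) / (real n ^ 2 * \<eta>)"
proof -
  let ?a = "mprof I" and ?b = "wprof I" and ?A = "{..<n}"
  define \<mu> where "\<mu> = (SOME \<mu>. stable n k I \<mu>)"
  have s: "stable n k I \<mu>" unfolding \<mu>_def by (rule someI_ex[OF stable_exists[OF wf]])
  note F = stable_facts[OF s]
  have len: "length (?a x) = k" "length (?b x) = k" if "x < n" for x
    using wf that unfolding wfI_def by auto
  define S where "S = (Inl ` ?A \<union> Inr ` ?A :: (nat + nat) set)"
  define bad where "bad x \<longleftrightarrow> \<bar>log 2 (match_dist n k I x) / log 2 (real n) + 1\<bar> > \<delta>" for x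
  define cond where "cond m \<longleftrightarrow> take j1 (?a m) = take j1 (?b (\<mu> m)) \<or> take j2 (?a m) \<noteq> take j2 (?b (\<mu> m))" for m
  define C where "C = {m\<in>?A. cond m}"
  have md1: "match_dist n k I (Inl m) = dw k (?a m) (?b (\<mu> m))" for m
    unfolding match_dist_def \<mu>_def Let_def by simp
  have md2: "match_dist n k I (Inr w) = dw k (?a (inv_into ?A \<mu> w)) (?b w)" for w
    unfolding match_dist_def \<mu>_def Let_def by simp
  have bc: "take j1 x = take j1 y \<or> take j2 x \<noteq> take j2 y"
    if "length x = k" "length y = k" "\<bar>log 2 (dw k x y) / log 2 (real n) + 1\<bar> > \<delta>" for x y
    by (rule bad_cond[OF n d j1 j2 h1 h2 that])
  have sub: "S \<inter> {x. bad x} \<subseteq> Inl ` C \<union> Inr ` (\<mu> ` C)"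
  proof
    fix x assume x: "x \<in> S \<inter> {x. bad x}"
    show "x \<in> Inl ` C \<union> Inr ` (\<mu> ` C)"
    proof (cases x)
      case (Inl m)
      then have m: "m < n" using x unfolding S_def by auto
      have "bad (Inl m)" using x Inl by simp
      then have "cond m" unfolding cond_def using bc[OF len(1)[OF m] len(2)[OF F(3)[OF m]]]
        unfolding bad_def md1 by blast
      then show ?thesis using Inl m unfolding C_def by blast
    next
      case (Inr w)
      then have w: "w < n" using x unfolding S_def by auto
      let ?m = "inv_into ?A \<mu> w"
      have m: "?m < n" using F(4)[OF w] .
      have mw: "\<mu> ?m = w" using F(5)[OF w] .
      have "bad (Inr w)" using x Inr by simp
      then have "take j1 (?a ?m) = take j1 (?b w) \<or> take j2 (?a ?m) \<noteq> take j2 (?b w)"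
        using bc[OF len(1)[OF m] len(2)[OF w]] unfolding bad_def md2 by blast
      then have "cond ?m" unfolding cond_def mw .
      then have "?m \<in> C" using m unfolding C_def by simp
      then have "w \<in> \<mu> ` C" using mw by (metis image_eqI)
      then show ?thesis using Inr by blast
    qed
  qed
  have finC: "finite C" unfolding C_def by simp
  have "card (S \<inter> {x. bad x}) \<le> card (Inl ` C \<union> Inr ` (\<mu> ` C))"
    by (rule card_mono[OF _ sub]) (use finC in simp)
  also have "\<dots> \<le> card (Inl ` C :: (nat + nat) set) + card (Inr ` (\<mu> ` C) :: (nat + nat) set)" by (rule card_Un_le)
  also have "\<dots> \<le> card C + card C"
    using card_image_le[OF finC, of "Inl :: nat \<Rightarrow> nat + nat"] card_image_le[OF finite_imageI[OF finC, of \<mu>], of "Inr :: nat \<Rightarrow> nat + nat"] card_image_le[OF finC, of \<mu>]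
    by linarith
  finally have c1: "card (S \<inter> {x. bad x}) \<le> 2 * card C" by simp
  define Cl where "Cl = {m\<in>?A. take j1 (?a m) = take j1 (?b (\<mu> m))}"
  define Fa where "Fa = {m\<in>?A. take j2 (?a m) \<noteq> take j2 (?b (\<mu> m))}"
  have "C \<subseteq> Cl \<union> Fa" unfolding C_def Cl_def Fa_def cond_def by blast
  then have "card C \<le> card (Cl \<union> Fa)" by (intro card_mono) (auto simp: Cl_def Fa_def)
  also have "\<dots> \<le> card Cl + card Fa" using card_Un_le by blast
  finally have c2: "card C \<le> card Cl + card Fa" .
  have cl: "real (card Cl) \<le> SMW n j1 ?a ?b" unfolding Cl_def by (rule close_card[OF s])
  have fa: "real (card Fa) \<le> (\<Sum>B\<in>Lk j2. \<bar>DB n j2 ?a ?b B\<bar>)" unfolding Fa_def by (rule far_card[OF wf s j2])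
  define Z where "Z = SMM n j2 ?a + SMM n j2 ?b - 2 * SMW n j2 ?a ?b"
  have "(\<Sum>B\<in>Lk j2. \<bar>DB n j2 ?a ?b B\<bar>)^2 \<le> 2^j2 * (\<Sum>B\<in>Lk j2. (DB n j2 ?a ?b B)^2)" by (rule CS_abs)
  also have "(\<Sum>B\<in>Lk j2. (DB n j2 ?a ?b B)^2) = Z" unfolding Z_def
    by (rule DB_sq_sum) (use len j2 in auto)
  finally have cs: "(\<Sum>B\<in>Lk j2. \<bar>DB n j2 ?a ?b B\<bar>)^2 \<le> 2^j2 * Z" .
  have fsq: "real (card Fa)^2 \<le> 2^j2 * Z"
  proof -
    have "real (card Fa)^2 \<le> (\<Sum>B\<in>Lk j2. \<bar>DB n j2 ?a ?b B\<bar>)^2"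
      by (rule power_mono[OF fa]) simp
    then show ?thesis using cs by linarith
  qed
  have np: "real n > 0" using n by simp
  define t where "t = real (card Fa) / real n"
  have t0: "t \<ge> 0" unfolding t_def by simp
  have "t \<le> \<eta> + t^2 / \<eta>" by (rule t_le[OF t0 eta])
  also have "t^2 / \<eta> = real (card Fa)^2 / (real n ^ 2 * \<eta>)" unfolding t_def by (simp add: power_divide)
  also have "\<dots> \<le> 2^j2 * Z / (real n ^ 2 * \<eta>)"
    using fsq np eta by (intro divide_right_mono) auto
  finally have tb: "t \<le> \<eta> + 2^j2 * Z / (real n ^ 2 * \<eta>)" by simp
  have "measure_pmf.prob (participant_pmf n) {x. bad x} = real (card (S \<inter> {x. bad x})) / real (card S)"
    unfolding participant_pmf_def S_def[symmetric] proof (rule measure_pmf_of_set)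
    have "Inl 0 \<in> S" using n unfolding S_def by auto
    then show "S \<noteq> {}" by blast
    show "finite S" unfolding S_def by simp
  qed
  also have "card S = 2 * n" unfolding S_def by (rule card_participants)
  also have "real (card (S \<inter> {x. bad x})) / real (2 * n) \<le> real (2 * card C) / real (2 * n)"
    using c1 np by (intro divide_right_mono) auto
  also have "\<dots> = real (card C) / real n" using np by simp
  also have "\<dots> \<le> (real (card Cl) + real (card Fa)) / real n"
    using c2 np by (intro divide_right_mono) auto
  also have "\<dots> = real (card Cl) / real n + t" unfolding t_def by (simp add: add_divide_distrib)
  also have "\<dots> \<le> SMW n j1 ?a ?b / real n + (\<eta> + 2^j2 * Z / (real n ^ 2 * \<eta>))"
    using cl tb np by (intro add_mono divide_right_mono) auto
  finally show ?thesis unfolding bad_def Z_def by simp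
qed


lemma part_ib_bound:
  fixes \<delta> \<eta> :: real
  assumes n: "n \<ge> 2" and d: "\<delta> > 0" and eta: "\<eta> > 0" and j1: "j1 \<le> k" and j2: "j2 \<le> k"
    and h1: "real n powr (-1-\<delta>) \<le> (1/2)^j1" and h2: "(1/2)^j2 \<le> real n powr (-1+\<delta>)"
  shows "measure_pmf.prob (pair_pmf (rpmp_pmf n k) (participant_pmf n))
           {(I, x). \<bar>log 2 (match_dist n k I x) / log 2 (real n) + 1\<bar> > \<delta>}
         \<le> real n * (1/2)^j1 + \<eta> + 2 * 2^j2 / (real n * \<eta>)"
proof -
  let ?Q = "pair_pmf (profiles_pmf n k) (profiles_pmf n k)"
  have finQ: "finite (set_pmf ?Q)" using finite_profiles by simp
  have np: "real n > 0" using n by simp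
  define c where "c = 2^j2 / (real n ^ 2 * \<eta>)"
  define h where "h = (\<lambda>x. (1 / real n) * (\<lambda>(f, g). SMW n j1 f g) x + c * (\<lambda>(f, g). SMM n j2 f) x
        + c * (\<lambda>(f, g). SMM n j2 g) x + (- 2 * c) * (\<lambda>(f, g). SMW n j2 f g) x + \<eta>)"
  define gb :: "rinstance \<Rightarrow> real" where "gb I = h (mprof I, wprof I)" for I
  have "measure_pmf.prob (pair_pmf (rpmp_pmf n k) (participant_pmf n))
           {(I, x). \<bar>log 2 (match_dist n k I x) / log 2 (real n) + 1\<bar> > \<delta>}
      = measure_pmf.expectation (rpmp_pmf n k) (\<lambda>I. measure_pmf.prob (participant_pmf n)
           {x. \<bar>log 2 (match_dist n k I x) / log 2 (real n) + 1\<bar> > \<delta>})"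
    by (subst prob_pair_pmf[OF finite_rpmp]) simp
  also have "\<dots> \<le> measure_pmf.expectation (rpmp_pmf n k) gb"
  proof (rule expect_mono_pmf[OF finite_rpmp])
    fix I assume I: "I \<in> set_pmf (rpmp_pmf n k)"
    have "measure_pmf.prob (participant_pmf n) {x. \<bar>log 2 (match_dist n k I x) / log 2 (real n) + 1\<bar> > \<delta>}
      \<le> SMW n j1 (mprof I) (wprof I) / real n + \<eta> +
       2^j2 * (SMM n j2 (mprof I) + SMM n j2 (wprof I) - 2 * SMW n j2 (mprof I) (wprof I)) / (real n ^ 2 * \<eta>)"
      by (rule per_I[OF wf_rpmp[OF I] n d eta j1 j2 h1 h2])
    also have "\<dots> = gb I" unfolding gb_def h_def c_def using eta np by (simp add: field_simps)
    finally show "measure_pmf.prob (participant_pmf n) {x. \<bar>log 2 (match_dist n k I x) / log 2 (real n) + 1\<bar> > \<delta>} \<le> gb I" .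
  qed
  also have "measure_pmf.expectation (rpmp_pmf n k) gb = measure_pmf.expectation ?Q h"
    unfolding gb_def by (rule expect_rpmp)
  also have "\<dots> = (1 / real n) * measure_pmf.expectation ?Q (\<lambda>(f, g). SMW n j1 f g)
      + c * measure_pmf.expectation ?Q (\<lambda>(f, g). SMM n j2 f) + c * measure_pmf.expectation ?Q (\<lambda>(f, g). SMM n j2 g)
      + (- 2 * c) * measure_pmf.expectation ?Q (\<lambda>(f, g). SMW n j2 f g) + \<eta>"
    unfolding h_def by (rule E_lin4[OF finQ])
  also have "\<dots> = (1 / real n) * (real n * real n * (1/2)^j1)
      + c * (real n + real n * (real n - 1) * (1/2)^j2) + c * (real n + real n * (real n - 1) * (1/2)^j2)
      + (- 2 * c) * (real n * real n * (1/2)^j2) + \<eta>"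
    using expect_SMW[OF j1, of n] expect_SMW[OF j2, of n] expect_SMM[OF j2, of n]
      expect_fst[where h="SMM n j2" and A="profiles_pmf n k" and B="profiles_pmf n k"]
      expect_snd[where h="SMM n j2" and A="profiles_pmf n k" and B="profiles_pmf n k"]
    by simp
  also have "\<dots> = real n * (1/2)^j1 + \<eta> + c * (2 * real n - 2 * real n * (1/2)^j2)"
    using np by (simp add: field_simps)
  also have "\<dots> \<le> real n * (1/2)^j1 + \<eta> + c * (2 * real n)"
  proof -
    have c0: "c \<ge> 0" unfolding c_def using eta np by simp
    have "0 \<le> 2 * real n * (1/2::real)^j2" by simp
    then have "c * (2 * real n - 2 * real n * (1/2)^j2) \<le> c * (2 * real n)"
      using c0 by (intro mult_left_mono) auto
    then show ?thesis by simp
  qed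
  also have "c * (2 * real n) = 2 * 2^j2 / (real n * \<eta>)"
    unfolding c_def using np eta by (simp add: power2_eq_square field_simps)
  finally show ?thesis .
qed


lemma recip_pow_ge:
  fixes t :: real
  assumes "(2::real)^j \<le> 2 powr t"
  shows "(1/2::real)^j \<ge> 2 powr (-t)"
proof -
  have "2 powr (-t) = 1 / 2 powr t" by (simp add: powr_minus_divide)
  also have "\<dots> \<le> 1 / 2^j" using assms by (intro divide_left_mono) auto
  finally show ?thesis by (simp add: power_one_over)
qed

lemma recip_pow_le:
  fixes t :: real
  assumes "(2::real)^j \<ge> 2 powr t"
  shows "(1/2::real)^j \<le> 2 powr (-t)"
proof -
  have "1 / (2::real)^j \<le> 1 / 2 powr t" using assms by (intro divide_left_mono) auto
  also have "\<dots> = 2 powr (-t)" by (simp add: powr_minus_divide)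
  finally show ?thesis by (simp add: power_one_over)
qed

theorem theorem3p4:
  fixes \<epsilon> :: real and k :: "nat \<Rightarrow> nat"
  assumes "\<epsilon> > 0"
  shows "((\<forall>\<^sub>F n in sequentially. real (k n) > (1 + \<epsilon>) * log 2 (real n)) \<longrightarrow>
           (\<forall>\<delta>>0. (\<lambda>n. measure_pmf.prob (rpmp_pmf n (k n))
                        {I. frac_multi n (k n) I > \<delta>}) \<longlonglongrightarrow> 0) \<and>
           (\<forall>\<delta>>0. (\<lambda>n. measure_pmf.prob (pair_pmf (rpmp_pmf n (k n)) (participant_pmf n))
                        {(I, x). \<bar>log 2 (match_dist n (k n) I x) / log 2 (real n) + 1\<bar> > \<delta>})
                     \<longlonglongrightarrow> 0)) \<and>
         ((\<forall>\<^sub>F n in sequentially. real (k n) > (2 + \<epsilon>) * log 2 (real n)) \<longrightarrow>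
           (\<lambda>n. measure_pmf.prob (rpmp_pmf n (k n)) {I. unique_without_ties n (k n) I})
             \<longlonglongrightarrow> 1)"
proof -
  have eps: "\<epsilon> > 0" by (rule assms)
  have ev2: "\<forall>\<^sub>F n in sequentially. n \<ge> (2::nat)" by (rule eventually_ge_at_top)
  have A: "\<forall>\<delta>>0. (\<lambda>n. measure_pmf.prob (rpmp_pmf n (k n)) {I. frac_multi n (k n) I > \<delta>}) \<longlonglongrightarrow> 0"
    if ev: "\<forall>\<^sub>F n in sequentially. real (k n) > (1 + \<epsilon>) * log 2 (real n)"
  proof (intro allI impI)
    fix \<delta> :: real assume d: "\<delta> > 0"
    show "(\<lambda>n. measure_pmf.prob (rpmp_pmf n (k n)) {I. frac_multi n (k n) I > \<delta>}) \<longlonglongrightarrow> 0"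
    proof (rule tendsto_sandwich[of "\<lambda>_. 0" _ _ "\<lambda>n. real n powr (-\<epsilon>) / \<delta>"])
      show "\<forall>\<^sub>F n in sequentially. 0 \<le> measure_pmf.prob (rpmp_pmf n (k n)) {I. frac_multi n (k n) I > \<delta>}"
        by simp
      show "\<forall>\<^sub>F n in sequentially. measure_pmf.prob (rpmp_pmf n (k n)) {I. frac_multi n (k n) I > \<delta>} \<le> real n powr (-\<epsilon>) / \<delta>"
        using eventually_conj[OF ev ev2]
      proof (rule eventually_mono)
        fix n assume h: "real (k n) > (1 + \<epsilon>) * log 2 (real n) \<and> n \<ge> 2"
        have np: "real n > 0" using h by simp
        have "measure_pmf.prob (rpmp_pmf n (k n)) {I. frac_multi n (k n) I > \<delta>} \<le> real n * (1/2)^(k n) / \<delta>"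
          by (rule part_ia_bound) (use h d in auto)
        also have "\<dots> \<le> real n * real n powr (-(1+\<epsilon>)) / \<delta>"
          using half_pow_lt[OF np, of "1+\<epsilon>" "k n"] h np d
          by (intro divide_right_mono mult_left_mono) auto
        also have "\<dots> = real n powr (-\<epsilon>) / \<delta>" using x_powr_combine[OF np] by simp
        finally show "measure_pmf.prob (rpmp_pmf n (k n)) {I. frac_multi n (k n) I > \<delta>} \<le> real n powr (-\<epsilon>) / \<delta>" .
      qed
      show "(\<lambda>_. 0) \<longlonglongrightarrow> (0::real)" by simp
      show "(\<lambda>n. real n powr (-\<epsilon>) / \<delta>) \<longlonglongrightarrow> 0"
        using tendsto_divide_zero[OF lim_powr0[OF eps], of \<delta>] by simp
    qed
  qed
  have B: "\<forall>\<delta>>0. (\<lambda>n. measure_pmf.prob (pair_pmf (rpmp_pmf n (k n)) (participant_pmf n))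
                        {(I, x). \<bar>log 2 (match_dist n (k n) I x) / log 2 (real n) + 1\<bar> > \<delta>}) \<longlonglongrightarrow> 0"
    if ev: "\<forall>\<^sub>F n in sequentially. real (k n) > (1 + \<epsilon>) * log 2 (real n)"
  proof (intro allI impI)
    fix \<delta> :: real assume d: "\<delta> > 0"
    define d' where "d' = min \<delta> (min (\<epsilon>/2) (1/2))"
    have d'p: "d' > 0" "d' \<le> \<delta>" "d' \<le> \<epsilon>/2" "d' \<le> 1/2" using d eps unfolding d'_def by auto
    define hb where "hb n = 2 * real n powr (-d') + real n powr (-d'/2) + 4 * real n powr (-d'/2)" for n
    show "(\<lambda>n. measure_pmf.prob (pair_pmf (rpmp_pmf n (k n)) (participant_pmf n))
                        {(I, x). \<bar>log 2 (match_dist n (k n) I x) / log 2 (real n) + 1\<bar> > \<delta>}) \<longlonglongrightarrow> 0"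
    proof (rule tendsto_sandwich[of "\<lambda>_. 0" _ _ hb])
      show "\<forall>\<^sub>F n in sequentially. 0 \<le> measure_pmf.prob (pair_pmf (rpmp_pmf n (k n)) (participant_pmf n))
                        {(I, x). \<bar>log 2 (match_dist n (k n) I x) / log 2 (real n) + 1\<bar> > \<delta>}"
        by simp
      show "\<forall>\<^sub>F n in sequentially. measure_pmf.prob (pair_pmf (rpmp_pmf n (k n)) (participant_pmf n))
                        {(I, x). \<bar>log 2 (match_dist n (k n) I x) / log 2 (real n) + 1\<bar> > \<delta>} \<le> hb n"
        using eventually_conj[OF ev ev2]
      proof (rule eventually_mono)
        fix n assume h: "real (k n) > (1 + \<epsilon>) * log 2 (real n) \<and> n \<ge> 2"
        have n2: "n \<ge> 2" using h by simp
        have x2: "real n \<ge> 2" using h by simp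
        have np: "real n > 0" using h by simp
        have L: "log 2 (real n) \<ge> 1" using x2 by simp
        define t1 where "t1 = (1 + d') * log 2 (real n)"
        define t2 where "t2 = (1 - d') * log 2 (real n)"
        define j1 where "j1 = nat \<lfloor>t1\<rfloor>"
        define j2 where "j2 = nat \<lceil>t2\<rceil>"
        define \<eta> where "\<eta> = real n powr (-d'/2)"
        have t1p: "t1 \<ge> 0" unfolding t1_def using L d'p by simp
        have t2p: "t2 \<ge> 0" unfolding t2_def using L d'p by simp
        have etap: "\<eta> > 0" unfolding \<eta>_def using np by simp
        have kk: "t1 < real (k n)" "t2 < real (k n)"
        proof -
          have "t1 \<le> (1 + \<epsilon>) * log 2 (real n)" unfolding t1_def using L d'p by (intro mult_right_mono) auto
          then show "t1 < real (k n)" using h by simp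
          have "t2 \<le> (1 + \<epsilon>) * log 2 (real n)" unfolding t2_def using L d'p eps by (intro mult_right_mono) auto
          then show "t2 < real (k n)" using h by simp
        qed
        have j1k: "j1 \<le> k n"
        proof -
          have "real j1 = of_int \<lfloor>t1\<rfloor>" unfolding j1_def using t1p by simp
          also have "\<dots> \<le> t1" by simp
          finally show ?thesis using kk by simp
        qed
        have j2k: "j2 \<le> k n"
        proof -
          have "real j2 = of_int \<lceil>t2\<rceil>" unfolding j2_def using t2p by simp
          also have "\<dots> < t2 + 1" by linarith
          finally show ?thesis using kk by simp
        qed
        have p1: "2 powr t1 = real n powr (1 + d')" unfolding t1_def by (rule pow2_log'[OF np])
        have p2: "2 powr t2 = real n powr (1 - d')" unfolding t2_def by (rule pow2_log'[OF np])
        have h1: "real n powr (-1-\<delta>) \<le> (1/2)^j1"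
        proof -
          have "real n powr (-1-\<delta>) \<le> real n powr (-t1 / log 2 (real n))"
          proof -
            have "-t1 / log 2 (real n) = -1 - d'" unfolding t1_def using L by (simp add: field_simps)
            then show ?thesis using d'p x2 by (intro powr_mono) auto
          qed
          also have "real n powr (-t1 / log 2 (real n)) = 2 powr (-t1)"
            using pow2_log'[OF np, of "-t1 / log 2 (real n)"] L by simp
          also have "\<dots> \<le> (1/2)^j1" by (rule recip_pow_ge) (unfold j1_def, rule floor_pow(1)[OF t1p])
          finally show ?thesis .
        qed
        have h2: "(1/2)^j2 \<le> real n powr (-1+\<delta>)"
        proof -
          have "(1/2::real)^j2 \<le> 2 powr (-t2)" by (rule recip_pow_le) (unfold j2_def, rule ceil_pow(1)[OF t2p])
          also have "2 powr (-t2) = real n powr (-t2 / log 2 (real n))"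
            using pow2_log'[OF np, of "-t2 / log 2 (real n)"] L by simp
          also have "real n powr (-t2 / log 2 (real n)) \<le> real n powr (-1+\<delta>)"
          proof -
            have "-t2 / log 2 (real n) = -1 + d'" unfolding t2_def using L by (simp add: field_simps)
            then show ?thesis using d'p x2 by (intro powr_mono) auto
          qed
          finally show ?thesis .
        qed
        have "measure_pmf.prob (pair_pmf (rpmp_pmf n (k n)) (participant_pmf n))
                        {(I, x). \<bar>log 2 (match_dist n (k n) I x) / log 2 (real n) + 1\<bar> > \<delta>}
           \<le> real n * (1/2)^j1 + \<eta> + 2 * 2^j2 / (real n * \<eta>)"
          by (rule part_ib_bound[OF n2 d etap j1k j2k h1 h2])
        also have "\<dots> \<le> 2 * real n powr (-d') + \<eta> + 4 * real n powr (-d'/2)"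
        proof (intro add_mono order_refl)
          show "real n * (1/2)^j1 \<le> 2 * real n powr (-d')"
            by (rule asym1[OF x2 d'p(1)]) (unfold j1_def t1_def[symmetric], rule floor_pow(2)[OF t1p])
          show "2 * 2^j2 / (real n * \<eta>) \<le> 4 * real n powr (-d'/2)"
            unfolding \<eta>_def by (rule asym2[OF x2]) (unfold j2_def t2_def[symmetric], rule ceil_pow(2)[OF t2p])
        qed
        also have "\<dots> = hb n" unfolding hb_def \<eta>_def by simp
        finally show "measure_pmf.prob (pair_pmf (rpmp_pmf n (k n)) (participant_pmf n))
                        {(I, x). \<bar>log 2 (match_dist n (k n) I x) / log 2 (real n) + 1\<bar> > \<delta>} \<le> hb n" .
      qed
      show "(\<lambda>_. 0) \<longlonglongrightarrow> (0::real)" by simp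
      have l1: "(\<lambda>n. real n powr (-d')) \<longlonglongrightarrow> 0" by (rule lim_powr0) (use d'p in simp)
      have l2: "(\<lambda>n. real n powr (-(d'/2))) \<longlonglongrightarrow> 0" by (rule lim_powr0) (use d'p in simp)
      have "(\<lambda>n. 2 * real n powr (-d') + real n powr (-(d'/2)) + 4 * real n powr (-(d'/2))) \<longlonglongrightarrow> 2 * 0 + 0 + 4 * 0"
        by (intro tendsto_intros l1 l2)
      then show "hb \<longlonglongrightarrow> 0" unfolding hb_def by simp
    qed
  qed
  have C: "(\<lambda>n. measure_pmf.prob (rpmp_pmf n (k n)) {I. unique_without_ties n (k n) I}) \<longlonglongrightarrow> 1"
    if ev: "\<forall>\<^sub>F n in sequentially. real (k n) > (2 + \<epsilon>) * log 2 (real n)"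
  proof (rule tendsto_sandwich[of "\<lambda>n. 1 - 2 * real n powr (-\<epsilon>)" _ _ "\<lambda>_. 1"])
    show "\<forall>\<^sub>F n in sequentially. 1 - 2 * real n powr (-\<epsilon>) \<le> measure_pmf.prob (rpmp_pmf n (k n)) {I. unique_without_ties n (k n) I}"
      using eventually_conj[OF ev ev2]
    proof (rule eventually_mono)
      fix n assume h: "real (k n) > (2 + \<epsilon>) * log 2 (real n) \<and> n \<ge> 2"
      have np: "real n > 0" using h by simp
      have "2 * real n * real n * (1/2)^(k n) \<le> 2 * real n * real n * real n powr (-(2+\<epsilon>))"
        using half_pow_lt[OF np, of "2+\<epsilon>" "k n"] h np by (intro mult_left_mono) auto
      also have "\<dots> = 2 * real n powr (-\<epsilon>)" using x2_powr_combine[OF np, of \<epsilon>] by simp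
      finally have "2 * real n * real n * (1/2)^(k n) \<le> 2 * real n powr (-\<epsilon>)" .
      moreover have "measure_pmf.prob (rpmp_pmf n (k n)) {I. unique_without_ties n (k n) I} \<ge> 1 - 2 * real n * real n * (1/2)^(k n)"
        by (rule part_ii_bound) (use h in simp)
      ultimately show "1 - 2 * real n powr (-\<epsilon>) \<le> measure_pmf.prob (rpmp_pmf n (k n)) {I. unique_without_ties n (k n) I}"
        by linarith
    qed
    show "\<forall>\<^sub>F n in sequentially. measure_pmf.prob (rpmp_pmf n (k n)) {I. unique_without_ties n (k n) I} \<le> 1"
      by simp
    have "(\<lambda>n. 1 - 2 * real n powr (-\<epsilon>)) \<longlonglongrightarrow> 1 - 2 * 0"
      by (intro tendsto_intros lim_powr0 eps)
    then show "(\<lambda>n. 1 - 2 * real n powr (-\<epsilon>)) \<longlonglongrightarrow> 1" by simp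
    show "(\<lambda>_. 1) \<longlonglongrightarrow> (1::real)" by simp
  qed
  show ?thesis using A B C by blast
qed


end
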